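(* Let $\{G_\theta:\theta>0\}$ be one of the parametric families listed below, indexed by the indicated parameter $\theta$ (all other parameters held fixed at arbitrary admissible values), let $G=G_1$, let $\theta>1$, and let $\ell$ denote the logarithmic loss. Then: (a) If the family is the normal scale family, exponential scale family, Laplace scale family, Weibull scale family, gamma scale family, generalized gamma scale family, or the log-normal log-scale family, then $\ell(G_\theta,G)<\ell(G_{1/\theta},G)$. (b) If the family is the inverse gamma scale family, then $\ell(G_\theta,G)>\ell(G_{1/\theta},G)$. (c) If the family is the gamma shape family, generalized gamma shape family, Pareto shape family, inverse Gaussian shape family, beta shape family, or the Poisson rate family, then $\ell(G_\theta,G)>\ell(G_{1/\theta},G)$.
   Context: Logarithmic loss: for a forecast $F$ with density (or probability mass function) $f$, $\ell(F,y)=-\log f(y)$, and $\ell(F,G)=\mathbb{E}[-\log f(Y)]$ for $Y\sim G$. Families (parameter $\theta$ is the one named; others fixed): - Normal scale family: $N(0,\theta^2)$. Laplace scale family: density $(2\theta)^{-1}e^{-|x|/\theta}$, $x\in\mathbb{R}$. Exponential scale family: density $\theta^{-1}e^{-x/\theta}$, $x>0$. - Generalized gamma scale family (fixed $k,\gamma>0$): density $\Gamma(k/\gamma)^{-1}\theta^{-k}\gamma x^{k-1}e^{-(x/\theta)^\gamma}$, $x>0$; the gamma scale family is the case $\gamma=1$, the Weibull scale family the case $k=\gamma$. - Log-normal log-scale family (fixed $\mu\in\mathbb{R}$): density $(x\theta\sqrt{2\pi})^{-1}e^{-(\log x-\mu)^2/(2\theta^2)}$, $x>0$. - Inverse gamma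 scale family (fixed $k>0$): density $\Gamma(k)^{-1}\theta^k x^{-k-1}e^{-\theta/x}$, $x>0$. - Generalized gamma shape family (fixed $\sigma,\gamma>0$): density $\Gamma(\theta/\gamma)^{-1}\sigma^{-\theta}\gamma x^{\theta-1}e^{-(x/\sigma)^\gamma}$, $x>0$; the gamma shape family is the case $\gamma=1$. - Pareto shape family (fixed $m>0$): density $\theta m^\theta x^{-\theta-1}$, $x\ge m$. - Inverse Gaussian shape family (fixed $\mu>0$): density $\sqrt{\theta/(2\pi x^3)}\,e^{-\theta(x-\mu)^2/(2\mu^2x)}$, $x>0$. - Beta shape family (fixed $\beta>0$): density $x^{\theta-1}(1-x)^{\beta-1}\Gamma(\theta+\beta)/(\Gamma(\theta)\Gamma(\beta))$, $x\in(0,1)$. - Poisson rate family: probability mass function $\theta^k e^{-\theta}/k!$, $k\in\{0,1,2,\dots\}$. *)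

theory Defs
  imports "HOL-Probability.Probability"
begin

definition logloss :: "real set \<Rightarrow> (real \<Rightarrow> real) \<Rightarrow> (real \<Rightarrow> real) \<Rightarrow> real" where
  "logloss S f g = (LINT y:S|lborel. g y * (- ln (f y)))"

definition logloss_discrete :: "(nat \<Rightarrow> real) \<Rightarrow> (nat \<Rightarrow> real) \<Rightarrow> real" where
  "logloss_discrete f g = (\<Sum>k. g k * (- ln (f k)))"

(* Normal scale family N(0,theta^2): normal_density 0 theta from HOL-Probability *)

definition laplace_scale_dens :: "real \<Rightarrow> real \<Rightarrow> real" where
  "laplace_scale_dens \<theta> x = exp (- \<bar>x\<bar> / \<theta>) / (2 * \<theta>)"

definition exp_scale_dens :: "real \<Rightarrow> real \<Rightarrow> real" where
  "exp_scale_dens \<theta> x = exp (- x / \<theta>) / \<theta>"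

definition gengamma_scale_dens :: "real \<Rightarrow> real \<Rightarrow> real \<Rightarrow> real \<Rightarrow> real" where
  "gengamma_scale_dens k \<gamma> \<theta> x =
     \<gamma> * x powr (k - 1) * exp (- ((x / \<theta>) powr \<gamma>)) / (Gamma (k / \<gamma>) * \<theta> powr k)"

definition lognormal_logscale_dens :: "real \<Rightarrow> real \<Rightarrow> real \<Rightarrow> real" where
  "lognormal_logscale_dens \<mu> \<theta> x =
     exp (- (ln x - \<mu>)\<^sup>2 / (2 * \<theta>\<^sup>2)) / (x * \<theta> * sqrt (2 * pi))"

definition invgamma_scale_dens :: "real \<Rightarrow> real \<Rightarrow> real \<Rightarrow> real" where
  "invgamma_scale_dens k \<theta> x = \<theta> powr k * x powr (- k - 1) * exp (- \<theta> / x) / Gamma k"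

definition gengamma_shape_dens :: "real \<Rightarrow> real \<Rightarrow> real \<Rightarrow> real \<Rightarrow> real" where
  "gengamma_shape_dens \<sigma> \<gamma> \<theta> x =
     \<gamma> * x powr (\<theta> - 1) * exp (- ((x / \<sigma>) powr \<gamma>)) / (Gamma (\<theta> / \<gamma>) * \<sigma> powr \<theta>)"

definition pareto_shape_dens :: "real \<Rightarrow> real \<Rightarrow> real \<Rightarrow> real" where
  "pareto_shape_dens m \<theta> x = \<theta> * m powr \<theta> * x powr (- \<theta> - 1)"

definition invgauss_shape_dens :: "real \<Rightarrow> real \<Rightarrow> real \<Rightarrow> real" where
  "invgauss_shape_dens \<mu> \<theta> x =
     sqrt (\<theta> / (2 * pi * x ^ 3)) * exp (- \<theta> * (x - \<mu>)\<^sup>2 / (2 * \<mu>\<^sup>2 * x))"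

definition beta_shape_dens :: "real \<Rightarrow> real \<Rightarrow> real \<Rightarrow> real" where
  "beta_shape_dens \<beta> \<theta> x =
     x powr (\<theta> - 1) * (1 - x) powr (\<beta> - 1) * Gamma (\<theta> + \<beta>) / (Gamma \<theta> * Gamma \<beta>)"

definition poisson_rate_pmf :: "real \<Rightarrow> nat \<Rightarrow> real" where
  "poisson_rate_pmf \<theta> k = \<theta> ^ k * exp (- \<theta>) / fact k"

end

theory Submission
  imports Defs
begin

lemma hk_mult [simp]: "integral S (\<lambda>x. c * f x) = c * integral S (f :: real \<Rightarrow> real)"
  using integral_cmul[of S c f] by simp

lemma ai_int: "f absolutely_integrable_on S \<Longrightarrow> (f :: real \<Rightarrow> real) integrable_on S"
  using set_lebesgue_integral_eq_integral(1) by blast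

lemma ai_cong:
  assumes "\<And>x. x \<in> S \<Longrightarrow> f x = g x"
  shows "f absolutely_integrable_on S \<longleftrightarrow> g absolutely_integrable_on S"
  using assms by (intro set_integrable_cong) auto

lemma cov:
  fixes f g h :: "real \<Rightarrow> real"
  assumes S: "S \<in> sets lebesgue"
    and der: "\<And>x. x \<in> S \<Longrightarrow> (g has_field_derivative g' x) (at x within S)"
    and inj: "inj_on g S" and T: "g ` S = T"
    and f: "f absolutely_integrable_on T" "integral T f = b"
    and h: "\<And>x. x \<in> S \<Longrightarrow> h x = \<bar>g' x\<bar> * f (g x)"
  shows "h absolutely_integrable_on S \<and> integral S h = b"
proof -
  have "(\<lambda>x. \<bar>g' x\<bar> * f (g x)) absolutely_integrable_on S \<and> integral S (\<lambda>x. \<bar>g' x\<bar> * f (g x)) = b"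
    using has_absolute_integral_change_of_variables_1'[OF S der inj, of f b] f T by auto
  then show ?thesis using ai_cong[of S h, OF h] integral_cong[of S h, OF h] by auto
qed

lemma gamma_int:
  fixes a :: real
  assumes a: "a > 0"
  shows "(\<lambda>t. t powr (a - 1) * exp (- t)) absolutely_integrable_on {0<..} \<and>
         integral {0<..} (\<lambda>t. t powr (a - 1) * exp (- t)) = Gamma a"
proof -
  have "((\<lambda>t. t powr (a - 1) / exp t) has_integral Gamma a) {0..}"
    by (rule Gamma_integral_real[OF a])
  hence "((\<lambda>t. t powr (a - 1) * exp (- t)) has_integral Gamma a) {0..}"
    by (simp add: exp_minus field_simps)
  hence 1: "((\<lambda>t. t powr (a - 1) * exp (- t)) has_integral Gamma a) {0<..}"
    by (rule has_integral_spike_set_eq[THEN iffD1, rotated -1])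
       (auto intro: negligible_subset[of "{0}"])
  hence "(\<lambda>t. t powr (a - 1) * exp (- t)) absolutely_integrable_on {0<..}"
    by (intro nonnegative_absolutely_integrable_1) auto
  with 1 show ?thesis by (auto dest: integral_unique)
qed

lemma gengamma_moment:
  fixes \<gamma> \<sigma> s :: real
  assumes g: "\<gamma> > 0" and sg: "\<sigma> > 0" and s: "s > -1"
  shows "(\<lambda>x. x powr s * exp (- ((x / \<sigma>) powr \<gamma>))) absolutely_integrable_on {0<..} \<and>
         integral {0<..} (\<lambda>x. x powr s * exp (- ((x / \<sigma>) powr \<gamma>))) = \<sigma> powr (s + 1) * Gamma ((s + 1) / \<gamma>) / \<gamma>"
proof -
  define C where "C = \<sigma> powr (s + 1) / \<gamma>"
  define a where "a = (s + 1) / \<gamma>"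
  have a: "a > 0" using g s by (simp add: a_def)
  have f: "(\<lambda>u. C * (u powr (a - 1) * exp (- u))) absolutely_integrable_on {0<..} \<and>
           integral {0<..} (\<lambda>u. C * (u powr (a - 1) * exp (- u))) = C * Gamma a"
    using gamma_int[OF a] by auto
  have main: "(\<lambda>x. x powr s * exp (- ((x / \<sigma>) powr \<gamma>))) absolutely_integrable_on {0<..} \<and>
         integral {0<..} (\<lambda>x. x powr s * exp (- ((x / \<sigma>) powr \<gamma>))) = C * Gamma a"
  proof (rule cov[OF _ _ _ _ f[THEN conjunct1] f[THEN conjunct2], where g = "\<lambda>x. (x / \<sigma>) powr \<gamma>"
          and g' = "\<lambda>x. \<gamma> / \<sigma> * (x / \<sigma>) powr (\<gamma> - 1)"])
    show "{0::real<..} \<in> sets lebesgue" by simp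
    show "((\<lambda>x. (x / \<sigma>) powr \<gamma>) has_field_derivative \<gamma> / \<sigma> * (x / \<sigma>) powr (\<gamma> - 1)) (at x within {0<..})"
      if "x \<in> {0<..}" for x
      using that sg by (auto intro!: derivative_eq_intros simp: field_simps)
    show "inj_on (\<lambda>x. (x / \<sigma>) powr \<gamma>) {0<..}"
    proof (rule inj_onI)
      fix x y :: real assume "x \<in> {0<..}" "y \<in> {0<..}" "(x / \<sigma>) powr \<gamma> = (y / \<sigma>) powr \<gamma>"
      hence "((x / \<sigma>) powr \<gamma>) powr (1/\<gamma>) = ((y / \<sigma>) powr \<gamma>) powr (1/\<gamma>)" by simp
      thus "x = y" using g sg \<open>x \<in> _\<close> \<open>y \<in> _\<close> by (simp add: powr_powr)
    qed
    show "(\<lambda>x. (x / \<sigma>) powr \<gamma>) ` {0<..} = {0<..}"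
    proof (intro equalityI subsetI)
      fix y assume "y \<in> (\<lambda>x. (x / \<sigma>) powr \<gamma>) ` {0<..}" then show "y \<in> {0<..}" using sg by auto
    next
      fix y :: real assume y: "y \<in> {0<..}"
      have "y = ((\<sigma> * y powr (1/\<gamma>)) / \<sigma>) powr \<gamma>" using y g sg by (simp add: powr_powr)
      moreover have "\<sigma> * y powr (1/\<gamma>) \<in> {0<..}" using y sg by simp
      ultimately show "y \<in> (\<lambda>x. (x / \<sigma>) powr \<gamma>) ` {0<..}" by blast
    qed
    show "x powr s * exp (- ((x / \<sigma>) powr \<gamma>)) =
         \<bar>\<gamma> / \<sigma> * (x / \<sigma>) powr (\<gamma> - 1)\<bar> * (C * (((x / \<sigma>) powr \<gamma>) powr (a - 1) * exp (- ((x / \<sigma>) powr \<gamma>))))"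
      if "x \<in> {0<..}" for x
    proof -
      define t where "t = x / \<sigma>"
      have t: "t > 0" using that sg by (simp add: t_def)
      have x: "x = \<sigma> * t" using sg by (simp add: t_def)
      have e: "\<gamma> * (a - 1) = s + 1 - \<gamma>" using g by (simp add: a_def field_simps)
      have "\<bar>\<gamma> / \<sigma> * t powr (\<gamma> - 1)\<bar> * (C * ((t powr \<gamma>) powr (a - 1) * exp (- (t powr \<gamma>))))
          = (\<gamma> / \<sigma> * C) * (t powr (\<gamma> - 1) * t powr (s + 1 - \<gamma>)) * exp (- (t powr \<gamma>))"
        using g sg t by (simp add: powr_powr e abs_mult)
      also have "t powr (\<gamma> - 1) * t powr (s + 1 - \<gamma>) = t powr s"
        using t by (simp add: powr_add[symmetric])
      also have "\<gamma> / \<sigma> * C = \<sigma> powr s"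
        using g sg by (simp add: C_def powr_add field_simps)
      also have "\<sigma> powr s * t powr s = x powr s" using sg t x by (simp add: powr_mult)
      finally show ?thesis by (simp add: t_def)
    qed
  qed
  then show ?thesis by (simp add: C_def a_def)
qed

lemma lint_eq_integral:
  fixes h :: "real \<Rightarrow> real"
  assumes S: "S \<in> sets borel" and c: "continuous_on S h" and ai: "h absolutely_integrable_on S"
  shows "(LINT y:S|lborel. h y) = integral S h"
proof -
  have m: "(\<lambda>x. indicator S x *\<^sub>R h x) \<in> borel_measurable lborel"
    using borel_measurable_continuous_on_indicator[OF S c] by simp
  have "(LINT y:S|lborel. h y) = (LINT y:S|lebesgue. h y)"
    unfolding set_lebesgue_integral_def using m
    by (simp add: integral_completion)
  also have "\<dots> = integral S h"
    by (rule set_lebesgue_integral_eq_integral(2)[OF ai])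
  finally show ?thesis .
qed

lemma logloss_lin3:
  fixes f g h1 h2 h3 :: "real \<Rightarrow> real"
  assumes S: "S \<in> sets borel"
    and eq: "\<And>x. x \<in> S \<Longrightarrow> g x * - ln (f x) = a1 * h1 x + a2 * h2 x + a3 * h3 x"
    and c: "continuous_on S h1" "continuous_on S h2" "continuous_on S h3"
    and i1: "h1 absolutely_integrable_on S" "integral S h1 = I1"
    and i2: "h2 absolutely_integrable_on S" "integral S h2 = I2"
    and i3: "h3 absolutely_integrable_on S" "integral S h3 = I3"
  shows "logloss S f g = a1 * I1 + a2 * I2 + a3 * I3"
proof -
  let ?h = "\<lambda>x. a1 * h1 x + a2 * h2 x + a3 * h3 x"
  have ai: "?h absolutely_integrable_on S"
    using i1 i2 i3 by (intro set_integral_add set_integrable_mult_right) auto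
  have "logloss S f g = (LINT x:S|lborel. ?h x)"
    unfolding logloss_def by (rule set_lebesgue_integral_cong) (use S eq in auto)
  also have "\<dots> = integral S ?h"
    by (rule lint_eq_integral[OF S _ ai]) (intro continuous_intros c)
  also have "\<dots> = a1 * I1 + a2 * I2 + a3 * I3"
    using i1 i2 i3 ai_int
    by (subst integral_add integral_add, auto intro!: integrable_add)+
  finally show ?thesis .
qed

lemma key_ineq:
  fixes u :: real assumes u: "u > 1"
  shows "2 * ln u < u - 1 / u"
proof -
  have "(\<lambda>u. u - 1 / u - 2 * ln u) 1 < (\<lambda>u. u - 1 / u - 2 * ln u) u"
  proof (rule DERIV_pos_imp_increasing_open[OF u])
    fix x :: real assume x: "1 < x" "x < u"
    have "((\<lambda>u. u - 1 / u - 2 * ln u) has_real_derivative (1 + 1 / x^2 - 2 / x)) (at x)"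
    proof -
      have x0: "x \<noteq> 0" using x by simp
      show ?thesis using x0 x apply (auto intro!: derivative_eq_intros)
        apply (simp add: field_simps power2_eq_square)
        done
    qed
    moreover have "1 + 1 / x^2 - 2 / x = (1 - 1 / x)^2" using x by (simp add: field_simps power2_eq_square)
    moreover have "(1 - 1 / x)^2 > 0" using x by simp
    ultimately show "\<exists>y. ((\<lambda>u. u - 1 / u - 2 * ln u) has_real_derivative y) (at x) \<and> 0 < y" by auto
  next
    show "continuous_on {1..u} (\<lambda>u. u - 1 / u - 2 * ln u)"
      by (intro continuous_intros) auto
  qed
  then show ?thesis by simp
qed

lemma ln_abs_bound:
  fixes x \<eta> :: real assumes x: "x > 0" and e: "\<eta> > 0"
  shows "\<bar>ln x\<bar> \<le> (x powr \<eta> + x powr (- \<eta>)) / \<eta>"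
proof -
  define t where "t = ln x"
  have "\<eta> * \<bar>t\<bar> \<le> exp (\<eta> * \<bar>t\<bar>)"
    using exp_ge_add_one_self[of "\<eta> * \<bar>t\<bar>"] by linarith
  also have "exp (\<eta> * \<bar>t\<bar>) \<le> exp (\<eta> * t) + exp (- \<eta> * t)"
    by (cases "t \<ge> 0") (auto simp: add_increasing add_increasing2)
  also have "exp (\<eta> * t) + exp (- \<eta> * t) = x powr \<eta> + x powr (- \<eta>)"
    using x by (simp add: powr_def t_def mult_ac)
  finally show ?thesis using e by (simp add: t_def field_simps)
qed

lemma ln_ai:
  fixes w :: "real \<Rightarrow> real"
  assumes S: "S \<subseteq> {0<..}" "S \<in> sets lebesgue" and c: "continuous_on S w"
    and nn: "\<And>x. x \<in> S \<Longrightarrow> w x \<ge> 0" and e: "\<eta> > 0"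
    and a1: "(\<lambda>x. w x * x powr \<eta>) absolutely_integrable_on S"
    and a2: "(\<lambda>x. w x * x powr (- \<eta>)) absolutely_integrable_on S"
  shows "(\<lambda>x. w x * ln x) absolutely_integrable_on S"
proof (rule measurable_bounded_by_integrable_imp_absolutely_integrable[OF _ S(2)])
  show "(\<lambda>x. w x * ln x) \<in> borel_measurable (lebesgue_on S)"
    using S by (intro continuous_imp_measurable_on_sets_lebesgue continuous_intros c) auto
  show "(\<lambda>x. (w x * x powr \<eta> + w x * x powr (- \<eta>)) / \<eta>) integrable_on S"
    using a1 a2 by (intro ai_int set_integrable_divide set_integral_add) auto
  fix x assume x: "x \<in> S"
  have "norm (w x * ln x) = w x * \<bar>ln x\<bar>" using nn[OF x] by (simp add: abs_mult)
  also have "\<dots> \<le> w x * ((x powr \<eta> + x powr (- \<eta>)) / \<eta>)"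
    using nn[OF x] ln_abs_bound[of x \<eta>] x S e by (intro mult_left_mono) auto
  finally show "norm (w x * ln x) \<le> (w x * x powr \<eta> + w x * x powr (- \<eta>)) / \<eta>"
    by (simp add: field_simps)
qed

lemma ggm1:
  fixes \<gamma> s :: real
  assumes g: "\<gamma> > 0" and s: "s > -1"
  shows "(\<lambda>x. x powr s * exp (- (x powr \<gamma>))) absolutely_integrable_on {0<..} \<and>
         integral {0<..} (\<lambda>x. x powr s * exp (- (x powr \<gamma>))) = Gamma ((s + 1) / \<gamma>) / \<gamma>"
  using gengamma_moment[OF g zero_less_one s] by simp

lemma ggm1c:
  fixes \<gamma> s c :: real
  assumes g: "\<gamma> > 0" and s: "s > -1"
    and h: "\<And>x. x > 0 \<Longrightarrow> h x = c * (x powr s * exp (- (x powr \<gamma>)))"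
  shows "h absolutely_integrable_on {0<..} \<and> integral {0<..} h = c * (Gamma ((s + 1) / \<gamma>) / \<gamma>)"
proof -
  have "(\<lambda>x. c * (x powr s * exp (- (x powr \<gamma>)))) absolutely_integrable_on {0<..} \<and>
        integral {0<..} (\<lambda>x. c * (x powr s * exp (- (x powr \<gamma>)))) = c * (Gamma ((s + 1) / \<gamma>) / \<gamma>)"
    using ggm1[OF g s] by auto
  then show ?thesis using ai_cong[of "{0<..}" h, OF h] integral_cong[of "{0<..}" h, OF h] by auto
qed

lemma Gamma_pos_real: "x > 0 \<Longrightarrow> Gamma (x::real) > 0"
  by (rule Gamma_real_pos)

lemma Gamma_plus1_pos: "x > 0 \<Longrightarrow> Gamma ((x::real) + 1) = x * Gamma x"
  by (rule Gamma_plus1) (auto elim!: nonpos_Ints_cases)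

lemma ggs_g:
  assumes "x > 0"
  shows "gengamma_scale_dens k \<gamma> 1 x = (\<gamma> / Gamma (k / \<gamma>)) * (x powr (k - 1) * exp (- (x powr \<gamma>)))"
  by (simp add: gengamma_scale_dens_def)

lemma ggs_logloss:
  fixes k \<gamma> \<theta> :: real
  assumes k: "k > 0" and g: "\<gamma> > 0" and t: "\<theta> > 0"
  shows "logloss {0<..} (gengamma_scale_dens k \<gamma> \<theta>) (gengamma_scale_dens k \<gamma> 1) =
    (ln (Gamma (k / \<gamma>)) - ln \<gamma> + k * ln \<theta>) * 1 + \<theta> powr (- \<gamma>) * (k / \<gamma>)
    + (- (k - 1)) * integral {0<..} (\<lambda>x. gengamma_scale_dens k \<gamma> 1 x * ln x)"
proof -
  define G where "G = Gamma (k / \<gamma>)"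
  have G: "G > 0" using k g by (simp add: G_def Gamma_pos_real)
  have G0: "Gamma (k / \<gamma>) \<noteq> 0" using G by (simp add: G_def)
  let ?g = "gengamma_scale_dens k \<gamma> 1"
  have i1: "?g absolutely_integrable_on {0<..} \<and> integral {0<..} ?g = (\<gamma> / G) * (Gamma ((k - 1 + 1) / \<gamma>) / \<gamma>)"
    by (rule ggm1c[OF g]) (use k in \<open>auto simp: ggs_g G_def\<close>)
  have i2: "(\<lambda>x. ?g x * x powr \<gamma>) absolutely_integrable_on {0<..} \<and>
      integral {0<..} (\<lambda>x. ?g x * x powr \<gamma>) = (\<gamma> / G) * (Gamma ((k - 1 + \<gamma> + 1) / \<gamma>) / \<gamma>)"
    by (rule ggm1c[OF g]) (use k g in \<open>auto simp: ggs_g G_def powr_add[symmetric]\<close>)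
  have e1: "(\<gamma> / G) * (Gamma ((k - 1 + 1) / \<gamma>) / \<gamma>) = 1" using G g by (simp add: G_def)
  have "(k - 1 + \<gamma> + 1) / \<gamma> = k / \<gamma> + 1" using g by (simp add: field_simps)
  hence "Gamma ((k - 1 + \<gamma> + 1) / \<gamma>) = (k / \<gamma>) * G"
    using k g by (simp add: G_def Gamma_plus1_pos)
  hence e2: "(\<gamma> / G) * (Gamma ((k - 1 + \<gamma> + 1) / \<gamma>) / \<gamma>) = k / \<gamma>" using G g by simp
  have a3: "(\<lambda>x. ?g x * ln x) absolutely_integrable_on {0<..}"
  proof (rule ln_ai[where \<eta> = "k / 2"])
    show "continuous_on {0<..} ?g" unfolding gengamma_scale_dens_def
      by (intro continuous_intros) (use G0 in auto)
    show "(\<lambda>x. ?g x * x powr (k / 2)) absolutely_integrable_on {0<..}"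
    proof (rule ggm1c[OF g, of "k - 1 + k / 2" _ "\<gamma> / G", THEN conjunct1])
      show "k - 1 + k / 2 > -1" using k by simp
      fix x :: real assume x: "x > 0"
      have "?g x * x powr (k / 2) = \<gamma> / G * ((x powr (k - 1) * x powr (k / 2)) * exp (- (x powr \<gamma>)))"
        by (simp add: ggs_g[OF x] G_def mult_ac)
      also have "x powr (k - 1) * x powr (k / 2) = x powr (k - 1 + k / 2)"
        by (simp add: powr_add[symmetric])
      finally show "?g x * x powr (k / 2) = \<gamma> / G * (x powr (k - 1 + k / 2) * exp (- (x powr \<gamma>)))" .
    qed
    show "(\<lambda>x. ?g x * x powr (- (k / 2))) absolutely_integrable_on {0<..}"
    proof (rule ggm1c[OF g, of "k - 1 - k / 2" _ "\<gamma> / G", THEN conjunct1])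
      show "k - 1 - k / 2 > -1" using k by simp
      fix x :: real assume x: "x > 0"
      have "?g x * x powr (- (k / 2)) = \<gamma> / G * ((x powr (k - 1) * x powr (- (k / 2))) * exp (- (x powr \<gamma>)))"
        by (simp add: ggs_g[OF x] G_def mult_ac)
      also have "x powr (k - 1) * x powr (- (k / 2)) = x powr (k - 1 - k / 2)"
        by (simp add: powr_add[symmetric])
      finally show "?g x * x powr (- (k / 2)) = \<gamma> / G * (x powr (k - 1 - k / 2) * exp (- (x powr \<gamma>)))" .
    qed
  qed (use k g in \<open>auto simp: gengamma_scale_dens_def\<close>)
  show ?thesis
  proof (rule logloss_lin3)
    show "{0::real<..} \<in> sets borel" by simp
    show "continuous_on {0<..} ?g" unfolding gengamma_scale_dens_def
      by (intro continuous_intros) (use G0 in auto)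
    show "continuous_on {0<..} (\<lambda>x. ?g x * x powr \<gamma>)" unfolding gengamma_scale_dens_def
      by (intro continuous_intros) (use G0 in auto)
    show "continuous_on {0<..} (\<lambda>x. ?g x * ln x)" unfolding gengamma_scale_dens_def
      by (intro continuous_intros) (use G0 in auto)
    show "?g absolutely_integrable_on {0<..}" "integral {0<..} ?g = 1" using i1 e1 by auto
    show "(\<lambda>x. ?g x * x powr \<gamma>) absolutely_integrable_on {0<..}"
         "integral {0<..} (\<lambda>x. ?g x * x powr \<gamma>) = k / \<gamma>" using i2 e2 by auto
    show "(\<lambda>x. ?g x * ln x) absolutely_integrable_on {0<..}" by (rule a3)
    show "integral {0<..} (\<lambda>x. ?g x * ln x) = integral {0<..} (\<lambda>x. ?g x * ln x)" ..
    fix x :: real assume x: "x \<in> {0<..}"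
    have lnf: "ln (gengamma_scale_dens k \<gamma> \<theta> x) =
          ln \<gamma> + (k - 1) * ln x - x powr \<gamma> * \<theta> powr (- \<gamma>) - ln G - k * ln \<theta>"
      using x g t G unfolding gengamma_scale_dens_def G_def[symmetric]
      by (simp add: ln_mult ln_div ln_powr powr_divide powr_minus divide_inverse ln_inverse powr_mult inverse_powr)
    then show "?g x * - ln (gengamma_scale_dens k \<gamma> \<theta> x) =
      (ln (Gamma (k / \<gamma>)) - ln \<gamma> + k * ln \<theta>) * ?g x + \<theta> powr - \<gamma> * (?g x * x powr \<gamma>) +
      - (k - 1) * (?g x * ln x)"
      by (simp only: lnf) (simp add: G_def algebra_simps)
  qed
qed

lemma ggs_main:
  fixes k \<gamma> \<theta> :: real
  assumes k: "k > 0" and g: "\<gamma> > 0" and t: "\<theta> > 1"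
  shows "logloss {0<..} (gengamma_scale_dens k \<gamma> \<theta>) (gengamma_scale_dens k \<gamma> 1)
       < logloss {0<..} (gengamma_scale_dens k \<gamma> (1 / \<theta>)) (gengamma_scale_dens k \<gamma> 1)"
proof -
  define u where "u = \<theta> powr \<gamma>"
  have u: "u > 1" using t g by (simp add: u_def)
  have lu: "ln u = \<gamma> * ln \<theta>" using t by (simp add: u_def ln_powr)
  have a: "(1 / \<theta>) powr (- \<gamma>) = u" using t by (simp add: u_def powr_minus powr_divide)
  have b: "\<theta> powr (- \<gamma>) = 1 / u" using t by (simp add: u_def powr_minus divide_inverse)
  have c: "ln (1 / \<theta>) = - ln \<theta>" using t by (simp add: ln_div)
  have pos: "0 < k / \<gamma> * (u - 1 / u - 2 * ln u)" using key_ineq[OF u] k g by simp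
  have eq: "k / \<gamma> * (u - 1 / u - 2 * ln u) = u * (k / \<gamma>) - 1 / u * (k / \<gamma>) - 2 * (k * ln \<theta>)"
    using lu g by (simp add: field_simps)
  show ?thesis
    using ggs_logloss[OF k g, of \<theta>] ggs_logloss[OF k g, of "1/\<theta>"] t a b c pos eq
    by simp
qed

lemma exp_ggs:
  assumes t: "\<theta> > 0"
  shows "logloss {0<..} (exp_scale_dens \<theta>) (exp_scale_dens 1) =
         logloss {0<..} (gengamma_scale_dens 1 1 \<theta>) (gengamma_scale_dens 1 1 1)"
  unfolding logloss_def
  by (rule set_lebesgue_integral_cong) (use t in \<open>auto simp: exp_scale_dens_def gengamma_scale_dens_def\<close>)

lemma lin2:
  fixes f1 f2 h :: "real \<Rightarrow> real"
  assumes "f1 absolutely_integrable_on S" "integral S f1 = I1"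
    and "f2 absolutely_integrable_on S" "integral S f2 = I2"
    and "\<And>x. x \<in> S \<Longrightarrow> h x = a * f1 x + b * f2 x"
  shows "h absolutely_integrable_on S \<and> integral S h = a * I1 + b * I2"
proof -
  have ai: "(\<lambda>x. a * f1 x + b * f2 x) absolutely_integrable_on S"
    using assms by (intro set_integral_add set_integrable_mult_right) auto
  have "integral S (\<lambda>x. a * f1 x + b * f2 x) = a * I1 + b * I2"
    using assms ai_int by (subst integral_add) (auto intro!: integrable_add)
  then show ?thesis using ai ai_cong[of S h, OF assms(5)] integral_cong[of S h, OF assms(5)] by auto
qed

lemma laplace_logloss:
  fixes \<theta> :: real assumes t: "\<theta> > 0"
  shows "logloss UNIV (laplace_scale_dens \<theta>) (laplace_scale_dens 1) = ln (2 * \<theta>) + 1 / \<theta>"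
proof -
  define h where "h = (\<lambda>y. laplace_scale_dens 1 y * - ln (laplace_scale_dens \<theta> y))"
  have hy: "h y = exp (- \<bar>y\<bar>) / 2 * (\<bar>y\<bar> / \<theta> + ln (2 * \<theta>))" for y
    using t by (simp add: h_def laplace_scale_dens_def ln_div ln_mult)
  define I where "I = (ln (2 * \<theta>) + 1 / \<theta>) / 2"
  have g0: "(\<lambda>x::real. x powr 0 * exp (- (x powr 1))) absolutely_integrable_on {0<..} \<and>
            integral {0<..} (\<lambda>x. x powr 0 * exp (- (x powr 1))) = Gamma (((0::real) + 1) / 1) / 1"
    by (rule ggm1) simp_all
  have g1: "(\<lambda>x::real. x powr 1 * exp (- (x powr 1))) absolutely_integrable_on {0<..} \<and>
            integral {0<..} (\<lambda>x. x powr 1 * exp (- (x powr 1))) = Gamma (((1::real) + 1) / 1) / 1"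
    by (rule ggm1) simp_all
  have G2: "Gamma (((1::real) + 1) / 1) / 1 = (1::real)" "Gamma (((0::real) + 1) / 1) / 1 = (1::real)"
    using Gamma_plus1_pos[of "1::real"] by simp_all
  have pos: "h absolutely_integrable_on {0<..} \<and> integral {0<..} h = (ln (2 * \<theta>) / 2) * (Gamma (((0::real) + 1) / 1) / 1) + (1 / (2 * \<theta>)) * (Gamma (((1::real) + 1) / 1) / 1)"
    by (rule lin2[OF g0[THEN conjunct1] g0[THEN conjunct2] g1[THEN conjunct1] g1[THEN conjunct2]])
       (use t in \<open>auto simp: hy field_simps\<close>)
  hence pos': "h absolutely_integrable_on {0<..}" "integral {0<..} h = I"
    using t G2 by (auto simp: I_def field_simps)
  have "(\<lambda>x. h (- x)) absolutely_integrable_on {..<0} \<and> integral {..<0} (\<lambda>x. h (- x)) = I"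
    using has_absolute_integral_reflect_real[of "{..<0}" "{0<..}" h I] pos' by auto
  moreover have "(\<lambda>x. h (- x)) = h" by (auto simp: hy)
  ultimately have neg: "h absolutely_integrable_on {..<0}" "integral {..<0} h = I" by auto
  have un: "h absolutely_integrable_on ({..<0} \<union> {0<..})"
    by (rule absolutely_integrable_Un[OF neg(1) pos'(1)])
  have iun: "integral ({..<0} \<union> {0<..}) h = I + I"
  proof -
    have e: "{..<0::real} \<inter> {0<..} = {}" by auto
    show ?thesis using neg pos' e by (subst integral_Un) (auto intro: ai_int)
  qed
  have n1: "negligible {x \<in> ({..<0} \<union> {0<..}) - UNIV. h x \<noteq> 0}" by simp
  have n2: "negligible {x \<in> UNIV - ({..<0} \<union> {0<..}). h x \<noteq> 0}"
    by (rule negligible_subset[of "{0}"]) auto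
  have U: "h absolutely_integrable_on UNIV" "integral UNIV h = I + I"
    using un iun absolutely_integrable_spike_set_eq[OF n1 n2] integral_spike_set[OF n1 n2] by auto
  have "logloss UNIV (laplace_scale_dens \<theta>) (laplace_scale_dens 1) = (LINT y:UNIV|lborel. h y)"
    by (simp add: logloss_def h_def)
  also have "\<dots> = integral UNIV h"
    by (rule lint_eq_integral[OF _ _ U(1)]) (use t in \<open>auto simp: hy intro!: continuous_intros\<close>)
  also have "\<dots> = ln (2 * \<theta>) + 1 / \<theta>" using U by (simp add: I_def)
  finally show ?thesis .
qed

lemma laplace_main:
  fixes \<theta> :: real assumes t: "\<theta> > 1"
  shows "logloss UNIV (laplace_scale_dens \<theta>) (laplace_scale_dens 1)
       < logloss UNIV (laplace_scale_dens (1 / \<theta>)) (laplace_scale_dens 1)"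
  using laplace_logloss[of \<theta>] laplace_logloss[of "1/\<theta>"] key_ineq[OF t] t
  by (simp add: ln_mult ln_div)

lemma lborel_to_hk:
  fixes f :: "real \<Rightarrow> real"
  assumes m: "f \<in> borel_measurable borel" and i: "integrable lborel f"
  shows "f absolutely_integrable_on UNIV \<and> integral UNIV f = integral\<^sup>L lborel f"
proof -
  have il: "integrable lebesgue f" using i m by (simp add: integrable_completion)
  hence ai: "f absolutely_integrable_on UNIV" by (simp add: set_integrable_def)
  have "integral UNIV f = (LINT x:UNIV|lebesgue. f x)"
    by (rule set_lebesgue_integral_eq_integral(2)[OF ai, symmetric])
  also have "\<dots> = integral\<^sup>L lebesgue f" by (simp add: set_lebesgue_integral_def)
  also have "\<dots> = integral\<^sup>L lborel f" using m by (simp add: integral_completion)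
  finally show ?thesis using ai by simp
qed

lemma normal_sq_int:
  assumes "\<sigma> > 0"
  shows "integral\<^sup>L lborel (\<lambda>x. normal_density \<mu> \<sigma> x * (x - \<mu>)\<^sup>2) = \<sigma>\<^sup>2"
  using integral_normal_moment_even[where \<mu>=\<mu> and \<sigma>=\<sigma> and k=1] assms by (simp add: fact_numeral)

lemma normal_logloss:
  fixes \<theta> :: real assumes t: "\<theta> > 0"
  shows "logloss UNIV (normal_density 0 \<theta>) (normal_density 0 1) = ln (2 * pi) / 2 + ln \<theta> + 1 / (2 * \<theta>\<^sup>2)"
proof -
  have "logloss UNIV (normal_density 0 \<theta>) (normal_density 0 1) =
        (\<integral>x. normal_density 0 1 x * - ln (normal_density 0 \<theta> x) \<partial>lborel)"
    by (simp add: logloss_def set_lebesgue_integral_def)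
  also have "\<dots> = (\<integral>x. (ln (2 * pi) / 2 + ln \<theta>) * normal_density 0 1 x +
                     1 / (2 * \<theta>\<^sup>2) * (normal_density 0 1 x * x\<^sup>2) \<partial>lborel)"
  proof (intro Bochner_Integration.integral_cong refl)
    have l2: "ln (\<theta>\<^sup>2) = 2 * ln \<theta>" using t by (simp add: power2_eq_square ln_mult)
    fix x show "normal_density 0 1 x * - ln (normal_density 0 \<theta> x) = (ln (2 * pi) / 2 + ln \<theta>) * normal_density 0 1 x +
                     1 / (2 * \<theta>\<^sup>2) * (normal_density 0 1 x * x\<^sup>2)"
      using t by (simp add: normal_density_def ln_mult ln_div ln_sqrt l2 field_simps)
  qed
  also have "\<dots> = (ln (2 * pi) / 2 + ln \<theta>) * 1 + 1 / (2 * \<theta>\<^sup>2) * 1"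
  proof -
    have m2: "integral\<^sup>L lborel (\<lambda>x. normal_density 0 1 x * x\<^sup>2) = 1" using normal_sq_int[of 1 0] by simp
    have i2: "integrable lborel (\<lambda>x. normal_density 0 1 x * x\<^sup>2)" using integrable_std_normal_moment[of 2] by simp
    show ?thesis using m2 i2 by (subst Bochner_Integration.integral_add) auto
  qed
  finally show ?thesis by simp
qed

lemma half_key:
  fixes \<theta> :: real assumes t: "\<theta> > 1"
  shows "ln \<theta> + 1 / (2 * \<theta>\<^sup>2) < ln (1 / \<theta>) + 1 / (2 * (1 / \<theta>)\<^sup>2)"
proof -
  have u: "\<theta>\<^sup>2 > 1" using t by (simp add: one_less_power)
  have "2 * ln (\<theta>\<^sup>2) < \<theta>\<^sup>2 - 1 / \<theta>\<^sup>2" by (rule key_ineq[OF u])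
  moreover have "ln (\<theta>\<^sup>2) = 2 * ln \<theta>" using t by (simp add: power2_eq_square ln_mult)
  moreover have "ln (1 / \<theta>) = - ln \<theta>" using t by (simp add: ln_div)
  ultimately show ?thesis using t by (simp add: field_simps power2_eq_square)
qed

lemma normal_main:
  fixes \<theta> :: real assumes t: "\<theta> > 1"
  shows "logloss UNIV (normal_density 0 \<theta>) (normal_density 0 1)
       < logloss UNIV (normal_density 0 (1 / \<theta>)) (normal_density 0 1)"
  using normal_logloss[of \<theta>] normal_logloss[of "1 / \<theta>"] half_key[OF t] t by simp

lemma normal_hk:
  fixes H :: "real \<Rightarrow> real"
  assumes m: "H \<in> borel_measurable borel" and i: "integrable lborel (\<lambda>x. normal_density \<mu> \<sigma> x * H x)"
  shows "(\<lambda>x. normal_density \<mu> \<sigma> x * H x) absolutely_integrable_on UNIV \<and>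
         integral UNIV (\<lambda>x. normal_density \<mu> \<sigma> x * H x) = integral\<^sup>L lborel (\<lambda>x. normal_density \<mu> \<sigma> x * H x)"
  by (rule lborel_to_hk[OF _ i]) (use m in measurable)

lemma lognormal_transfer:
  fixes H :: "real \<Rightarrow> real"
  assumes f: "(\<lambda>u. normal_density \<mu> 1 u * H u) absolutely_integrable_on UNIV"
             "integral UNIV (\<lambda>u. normal_density \<mu> 1 u * H u) = b"
  shows "(\<lambda>x. lognormal_logscale_dens \<mu> 1 x * H (ln x)) absolutely_integrable_on {0<..} \<and>
         integral {0<..} (\<lambda>x. lognormal_logscale_dens \<mu> 1 x * H (ln x)) = b"
proof (rule cov[OF _ _ _ _ f, where g = ln and g' = "\<lambda>x. 1 / x"])
  show "{0::real<..} \<in> sets lebesgue" by simp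
  show "(ln has_field_derivative 1 / x) (at x within {0<..})" if "x \<in> {0<..}" for x :: real
    using that by (auto intro!: derivative_eq_intros)
  show "inj_on ln {0::real<..}" by (auto simp: inj_on_def)
  show "ln ` {0::real<..} = UNIV"
  proof (intro equalityI subsetI)
    fix y :: real show "y \<in> ln ` {0<..}" by (rule image_eqI[of _ _ "exp y"]) auto
  qed auto
  fix x :: real assume x: "x \<in> {0<..}"
  then show "lognormal_logscale_dens \<mu> 1 x * H (ln x) = \<bar>1 / x\<bar> * (normal_density \<mu> 1 (ln x) * H (ln x))"
    by (simp add: lognormal_logscale_dens_def normal_density_def)
qed

lemma lognormal_logloss:
  fixes \<theta> \<mu> :: real assumes t: "\<theta> > 0"
  shows "logloss {0<..} (lognormal_logscale_dens \<mu> \<theta>) (lognormal_logscale_dens \<mu> 1) =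
         (ln \<theta> + ln (sqrt (2 * pi))) * 1 + 1 / (2 * \<theta>\<^sup>2) * 1 + 1 * \<mu>"
proof -
  let ?g = "lognormal_logscale_dens \<mu> 1"
  have n1: "(\<lambda>u. normal_density \<mu> 1 u * 1) absolutely_integrable_on UNIV \<and>
            integral UNIV (\<lambda>u. normal_density \<mu> 1 u * 1) = 1"
    using normal_hk[of "\<lambda>_. 1" \<mu> 1] by simp
  have n2: "(\<lambda>u. normal_density \<mu> 1 u * (u - \<mu>)\<^sup>2) absolutely_integrable_on UNIV \<and>
            integral UNIV (\<lambda>u. normal_density \<mu> 1 u * (u - \<mu>)\<^sup>2) = 1"
    using normal_hk[of "\<lambda>u. (u - \<mu>)\<^sup>2" \<mu> 1] normal_sq_int[of 1 \<mu>] integrable_normal_moment[where \<mu>=\<mu> and \<sigma>=1 and k=2] by simp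
  have n3: "(\<lambda>u. normal_density \<mu> 1 u * u) absolutely_integrable_on UNIV \<and>
            integral UNIV (\<lambda>u. normal_density \<mu> 1 u * u) = \<mu>"
    using normal_hk[of "\<lambda>u. u" \<mu> 1] integral_normal_moment_nz_1[where \<mu>=\<mu> and \<sigma>=1] integrable_normal_moment_nz_1[where \<mu>=\<mu> and \<sigma>=1] by simp
  note l1 = lognormal_transfer[OF n1[THEN conjunct1] n1[THEN conjunct2]]
  note l2 = lognormal_transfer[OF n2[THEN conjunct1] n2[THEN conjunct2]]
  note l3 = lognormal_transfer[OF n3[THEN conjunct1] n3[THEN conjunct2]]
  show ?thesis
  proof (rule logloss_lin3)
    show "{0::real<..} \<in> sets borel" by simp
    show "continuous_on {0<..} (\<lambda>x. ?g x * 1)" "continuous_on {0<..} (\<lambda>x. ?g x * (ln x - \<mu>)\<^sup>2)"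
         "continuous_on {0<..} (\<lambda>x. ?g x * ln x)"
      unfolding lognormal_logscale_dens_def by (intro continuous_intros; auto)+
    show "(\<lambda>x. ?g x * 1) absolutely_integrable_on {0<..}" "integral {0<..} (\<lambda>x. ?g x * 1) = 1"
      using l1 by auto
    show "(\<lambda>x. ?g x * (ln x - \<mu>)\<^sup>2) absolutely_integrable_on {0<..}"
         "integral {0<..} (\<lambda>x. ?g x * (ln x - \<mu>)\<^sup>2) = 1"
      using l2 by auto
    show "(\<lambda>x. ?g x * ln x) absolutely_integrable_on {0<..}" "integral {0<..} (\<lambda>x. ?g x * ln x) = \<mu>"
      using l3 by auto
    fix x :: real assume x: "x \<in> {0<..}"
    have lnf: "ln (lognormal_logscale_dens \<mu> \<theta> x) = - (ln x - \<mu>)\<^sup>2 / (2 * \<theta>\<^sup>2) - ln x - ln \<theta> - ln (sqrt (2 * pi))"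
      using x t by (simp add: lognormal_logscale_dens_def ln_div ln_mult)
    show "?g x * - ln (lognormal_logscale_dens \<mu> \<theta> x) =
          (ln \<theta> + ln (sqrt (2 * pi))) * (?g x * 1) + 1 / (2 * \<theta>\<^sup>2) * (?g x * (ln x - \<mu>)\<^sup>2) + 1 * (?g x * ln x)"
      by (simp only: lnf) (simp add: algebra_simps)
  qed
qed

lemma lognormal_main:
  fixes \<theta> \<mu> :: real assumes t: "\<theta> > 1"
  shows "logloss {0<..} (lognormal_logscale_dens \<mu> \<theta>) (lognormal_logscale_dens \<mu> 1)
       < logloss {0<..} (lognormal_logscale_dens \<mu> (1 / \<theta>)) (lognormal_logscale_dens \<mu> 1)"
  using lognormal_logloss[of \<theta> \<mu>] lognormal_logloss[of "1 / \<theta>" \<mu>] half_key[OF t] t by simp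

lemma invgm:
  fixes s :: real assumes s: "s > 0"
  shows "(\<lambda>x. x powr (- s - 1) * exp (- 1 / x)) absolutely_integrable_on {0<..} \<and>
         integral {0<..} (\<lambda>x. x powr (- s - 1) * exp (- 1 / x)) = Gamma s"
proof (rule cov[OF _ _ _ _ gamma_int[OF s, THEN conjunct1] gamma_int[OF s, THEN conjunct2],
        where g = "\<lambda>x. 1 / x" and g' = "\<lambda>x. - 1 / x\<^sup>2"])
  show "{0::real<..} \<in> sets lebesgue" by simp
  show "((\<lambda>x. 1 / x) has_field_derivative - 1 / x\<^sup>2) (at x within {0<..})" if "x \<in> {0<..}" for x :: real
    using that by (auto intro!: derivative_eq_intros simp: power2_eq_square)
  show "inj_on (\<lambda>x. 1 / x) {0::real<..}" by (auto simp: inj_on_def)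
  show "(\<lambda>x. 1 / x) ` {0::real<..} = {0<..}"
  proof (intro equalityI subsetI)
    fix y :: real assume "y \<in> {0<..}"
    then show "y \<in> (\<lambda>x. 1 / x) ` {0<..}" by (intro image_eqI[of _ _ "1 / y"]) auto
  qed auto
  fix x :: real assume x: "x \<in> {0<..}"
  have "\<bar>- 1 / x\<^sup>2\<bar> * ((1 / x) powr (s - 1) * exp (- (1 / x))) = (x powr (-2) * x powr (1 - s)) * exp (- 1 / x)"
    using x by (simp add: powr_divide powr_minus powr_diff field_simps power2_eq_square)
  also have "x powr (-2) * x powr (1 - s) = x powr (-2 + (1 - s))" by (rule powr_add[symmetric])
  also have "-2 + (1 - s) = - s - 1" by simp
  finally show "x powr (- s - 1) * exp (- 1 / x) = \<bar>- 1 / x\<^sup>2\<bar> * ((1 / x) powr (s - 1) * exp (- (1 / x)))" by simp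
qed

lemma invgmc:
  fixes s c :: real
  assumes s: "s > 0" and h: "\<And>x. x > 0 \<Longrightarrow> h x = c * (x powr (- s - 1) * exp (- 1 / x))"
  shows "h absolutely_integrable_on {0<..} \<and> integral {0<..} h = c * Gamma s"
proof -
  have "(\<lambda>x. c * (x powr (- s - 1) * exp (- 1 / x))) absolutely_integrable_on {0<..} \<and>
        integral {0<..} (\<lambda>x. c * (x powr (- s - 1) * exp (- 1 / x))) = c * Gamma s"
    using invgm[OF s] by auto
  then show ?thesis using ai_cong[of "{0<..}" h, OF h] integral_cong[of "{0<..}" h, OF h] by auto
qed

lemma invgamma_logloss:
  fixes k \<theta> :: real assumes k: "k > 0" and t: "\<theta> > 0"
  shows "logloss {0<..} (invgamma_scale_dens k \<theta>) (invgamma_scale_dens k 1) =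
    (- k * ln \<theta> + ln (Gamma k)) * 1 + \<theta> * k
    + (k + 1) * integral {0<..} (\<lambda>x. invgamma_scale_dens k 1 x * ln x)"
proof -
  have G: "Gamma k > 0" using k by (rule Gamma_real_pos)
  let ?g = "invgamma_scale_dens k 1"
  have gx: "?g x = (1 / Gamma k) * (x powr (- k - 1) * exp (- 1 / x))" for x
    by (simp add: invgamma_scale_dens_def)
  have i1: "?g absolutely_integrable_on {0<..} \<and> integral {0<..} ?g = (1 / Gamma k) * Gamma k"
    by (rule invgmc[OF k]) (simp add: gx)
  have i2: "(\<lambda>x. ?g x * (1 / x)) absolutely_integrable_on {0<..} \<and>
      integral {0<..} (\<lambda>x. ?g x * (1 / x)) = (1 / Gamma k) * Gamma (k + 1)"
  proof (rule invgmc)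
    show "k + 1 > 0" using k by simp
    fix x :: real assume x: "x > 0"
    have xm1: "x powr (-1) = 1 / x" using x by (simp add: powr_minus_divide)
    have "?g x * (1 / x) = (1 / Gamma k) * ((x powr (- k - 1) * x powr (-1)) * exp (- 1 / x))"
      by (simp only: gx xm1) (simp add: field_simps)
    also have "x powr (- k - 1) * x powr (-1) = x powr (- k - 1 + (-1))" by (rule powr_add[symmetric])
    also have "- k - 1 + (-1) = - (k + 1) - 1" by simp
    finally show "?g x * (1 / x) = (1 / Gamma k) * (x powr (- (k + 1) - 1) * exp (- 1 / x))" .
  qed
  have a3: "(\<lambda>x. ?g x * ln x) absolutely_integrable_on {0<..}"
  proof (rule ln_ai[where \<eta> = "k / 2"])
    show "continuous_on {0<..} ?g" unfolding invgamma_scale_dens_def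
      by (intro continuous_intros) (use G in auto)
    show "(\<lambda>x. ?g x * x powr (k / 2)) absolutely_integrable_on {0<..}"
    proof (rule invgmc[of "k / 2" _ "1 / Gamma k", THEN conjunct1])
      show "k / 2 > 0" using k by simp
      fix x :: real assume x: "x > 0"
      have "?g x * x powr (k / 2) = (1 / Gamma k) * ((x powr (- k - 1) * x powr (k / 2)) * exp (- 1 / x))"
        by (simp add: gx mult_ac)
      also have "x powr (- k - 1) * x powr (k / 2) = x powr (- k - 1 + k / 2)" by (rule powr_add[symmetric])
      also have "- k - 1 + k / 2 = - (k / 2) - 1" by simp
      finally show "?g x * x powr (k / 2) = (1 / Gamma k) * (x powr (- (k / 2) - 1) * exp (- 1 / x))" .
    qed
    show "(\<lambda>x. ?g x * x powr (- (k / 2))) absolutely_integrable_on {0<..}"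
    proof (rule invgmc[of "k + k / 2" _ "1 / Gamma k", THEN conjunct1])
      show "k + k / 2 > 0" using k by simp
      fix x :: real assume x: "x > 0"
      have "?g x * x powr (- (k / 2)) = (1 / Gamma k) * ((x powr (- k - 1) * x powr (- (k / 2))) * exp (- 1 / x))"
        by (simp add: gx mult_ac)
      also have "x powr (- k - 1) * x powr (- (k / 2)) = x powr (- k - 1 + - (k / 2))" by (rule powr_add[symmetric])
      also have "- k - 1 + - (k / 2) = - (k + k / 2) - 1" by simp
      finally show "?g x * x powr (- (k / 2)) = (1 / Gamma k) * (x powr (- (k + k / 2) - 1) * exp (- 1 / x))" .
    qed
  qed (use k G in \<open>auto simp: invgamma_scale_dens_def\<close>)
  show ?thesis
  proof (rule logloss_lin3)
    show "{0::real<..} \<in> sets borel" by simp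
    show "continuous_on {0<..} ?g" "continuous_on {0<..} (\<lambda>x. ?g x * (1 / x))"
         "continuous_on {0<..} (\<lambda>x. ?g x * ln x)"
      unfolding invgamma_scale_dens_def by (intro continuous_intros; use G in auto)+
    show "?g absolutely_integrable_on {0<..}" "integral {0<..} ?g = 1" using i1 G by auto
    show "(\<lambda>x. ?g x * (1 / x)) absolutely_integrable_on {0<..}"
         "integral {0<..} (\<lambda>x. ?g x * (1 / x)) = k" using i2 G k by (auto simp: Gamma_plus1_pos)
    show "(\<lambda>x. ?g x * ln x) absolutely_integrable_on {0<..}" by (rule a3)
    show "integral {0<..} (\<lambda>x. ?g x * ln x) = integral {0<..} (\<lambda>x. ?g x * ln x)" ..
    fix x :: real assume x: "x \<in> {0<..}"
    have lnf: "ln (invgamma_scale_dens k \<theta> x) = k * ln \<theta> - (k + 1) * ln x - \<theta> / x - ln (Gamma k)"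
      using x t G by (simp add: invgamma_scale_dens_def ln_div ln_mult ln_powr algebra_simps)
    show "?g x * - ln (invgamma_scale_dens k \<theta> x) =
          (- k * ln \<theta> + ln (Gamma k)) * ?g x + \<theta> * (?g x * (1 / x)) + (k + 1) * (?g x * ln x)"
      by (simp only: lnf) (simp add: algebra_simps)
  qed
qed

lemma invgamma_main:
  fixes k \<theta> :: real assumes k: "k > 0" and t: "\<theta> > 1"
  shows "logloss {0<..} (invgamma_scale_dens k \<theta>) (invgamma_scale_dens k 1)
       > logloss {0<..} (invgamma_scale_dens k (1 / \<theta>)) (invgamma_scale_dens k 1)"
proof -
  have "0 < k * (\<theta> - 1 / \<theta> - 2 * ln \<theta>)" using key_ineq[OF t] k by simp
  moreover have "ln (1 / \<theta>) = - ln \<theta>" using t by (simp add: ln_div)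
  ultimately show ?thesis
    using invgamma_logloss[OF k, of \<theta>] invgamma_logloss[OF k, of "1 / \<theta>"] t
    by (simp add: algebra_simps)
qed

lemma ai_Ioi_Ici:
  fixes f :: "real \<Rightarrow> real"
  assumes "f absolutely_integrable_on {a<..}" "integral {a<..} f = b"
  shows "f absolutely_integrable_on {a..} \<and> integral {a..} f = b"
proof -
  have n1: "negligible {x \<in> {a<..} - {a..}. f x \<noteq> 0}" by (rule negligible_subset[of "{}"]) auto
  have n2: "negligible {x \<in> {a..} - {a<..}. f x \<noteq> 0}"
    by (rule negligible_subset[of "{a}"]) auto
  show ?thesis using assms absolutely_integrable_spike_set_eq[OF n1 n2] integral_spike_set[OF n1 n2] by auto
qed

lemma exp_int0:
  "(\<lambda>u::real. exp (- u)) absolutely_integrable_on {0..} \<and> integral {0..} (\<lambda>u::real. exp (- u)) = 1"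
proof -
  have g: "(\<lambda>x::real. x powr 0 * exp (- (x powr 1))) absolutely_integrable_on {0<..} \<and>
            integral {0<..} (\<lambda>x. x powr 0 * exp (- (x powr 1))) = Gamma (((0::real) + 1) / 1) / 1"
    by (rule ggm1) simp_all
  have e: "\<And>x::real. x \<in> {0<..} \<Longrightarrow> x powr 0 * exp (- (x powr 1)) = exp (- x)" by (auto simp: powr_one)
  have "(\<lambda>u::real. exp (- u)) absolutely_integrable_on {0<..} \<and> integral {0<..} (\<lambda>u::real. exp (- u)) = 1 * (Gamma (((0::real) + 1) / 1) / 1) + 0 * (Gamma (((0::real) + 1) / 1) / 1)"
    by (rule lin2[OF g[THEN conjunct1] g[THEN conjunct2] g[THEN conjunct1] g[THEN conjunct2]]) (simp add: e)
  then show ?thesis by (intro ai_Ioi_Ici) auto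
qed

lemma exp_int1:
  "(\<lambda>u::real. u * exp (- u)) absolutely_integrable_on {0..} \<and> integral {0..} (\<lambda>u::real. u * exp (- u)) = 1"
proof -
  have g: "(\<lambda>x::real. x powr 1 * exp (- (x powr 1))) absolutely_integrable_on {0<..} \<and>
            integral {0<..} (\<lambda>x. x powr 1 * exp (- (x powr 1))) = Gamma (((1::real) + 1) / 1) / 1"
    by (rule ggm1) simp_all
  have G2: "Gamma (((1::real) + 1) / 1) / 1 = 1" using Gamma_plus1_pos[of "1::real"] by simp
  have e: "\<And>x::real. x \<in> {0<..} \<Longrightarrow> x powr 1 * exp (- (x powr 1)) = x * exp (- x)" by (auto simp: powr_one)
  have "(\<lambda>u::real. u * exp (- u)) absolutely_integrable_on {0<..} \<and> integral {0<..} (\<lambda>u::real. u * exp (- u)) = 1 * (Gamma (((1::real) + 1) / 1) / 1) + 0 * (Gamma (((1::real) + 1) / 1) / 1)"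
    by (rule lin2[OF g[THEN conjunct1] g[THEN conjunct2] g[THEN conjunct1] g[THEN conjunct2]]) (simp add: e)
  then show ?thesis using G2 by (intro ai_Ioi_Ici) auto
qed

lemma pareto_transfer:
  fixes H :: "real \<Rightarrow> real" and m :: real
  assumes m: "m > 0"
    and f: "(\<lambda>u::real. exp (- u) * H u) absolutely_integrable_on {0..}" "integral {0..} (\<lambda>u::real. exp (- u) * H u) = b"
  shows "(\<lambda>x. pareto_shape_dens m 1 x * H (ln (x / m))) absolutely_integrable_on {m..} \<and>
         integral {m..} (\<lambda>x. pareto_shape_dens m 1 x * H (ln (x / m))) = b"
proof (rule cov[OF _ _ _ _ f, where g = "\<lambda>x. ln (x / m)" and g' = "\<lambda>x. 1 / x"])
  show "{m..} \<in> sets lebesgue" by simp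
  show "((\<lambda>x. ln (x / m)) has_field_derivative 1 / x) (at x within {m..})" if "x \<in> {m..}" for x :: real
    using that m by (auto intro!: derivative_eq_intros simp: field_simps)
  show "inj_on (\<lambda>x. ln (x / m)) {m..}"
  proof (rule inj_onI)
    fix x y assume "x \<in> {m..}" "y \<in> {m..}" "ln (x / m) = ln (y / m)"
    then show "x = y" using m by simp
  qed
  show "(\<lambda>x. ln (x / m)) ` {m..} = {0..}"
  proof (intro equalityI subsetI)
    fix y :: real assume y: "y \<in> {0..}"
    have "m * exp y \<ge> m * 1" using y m by (intro mult_left_mono) auto
    then show "y \<in> (\<lambda>x. ln (x / m)) ` {m..}" using m by (intro image_eqI[of _ _ "m * exp y"]) auto
  next
    fix y assume "y \<in> (\<lambda>x. ln (x / m)) ` {m..}"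
    then show "y \<in> {0..}" using m by auto
  qed
  fix x :: real assume x: "x \<in> {m..}"
  then have x0: "x > 0" using m by simp
  have "x powr (- 1 - 1) = 1 / x ^ 2" using x0 by (simp add: powr_minus_divide powr_realpow)
  then show "pareto_shape_dens m 1 x * H (ln (x / m)) = \<bar>1 / x\<bar> * (exp (- ln (x / m)) * H (ln (x / m)))"
    using x0 m by (simp add: pareto_shape_dens_def exp_minus power2_eq_square)
qed

lemma pareto_logloss:
  fixes m \<theta> :: real assumes m: "m > 0" and t: "\<theta> > 0"
  shows "logloss {m..} (pareto_shape_dens m \<theta>) (pareto_shape_dens m 1) =
         (- ln \<theta> - \<theta> * ln m) * 1 + (\<theta> + 1) * (1 + ln m) + 0 * 0"
proof -
  let ?g = "pareto_shape_dens m 1"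
  have f1: "(\<lambda>u::real. exp (- u) * 1) absolutely_integrable_on {0..} \<and> integral {0..} (\<lambda>u::real. exp (- u) * 1) = 1"
    using exp_int0 by simp
  have f2: "(\<lambda>u::real. exp (- u) * (u + ln m)) absolutely_integrable_on {0..} \<and>
            integral {0..} (\<lambda>u::real. exp (- u) * (u + ln m)) = 1 * 1 + ln m * 1"
    by (rule lin2[OF exp_int1[THEN conjunct1] exp_int1[THEN conjunct2] exp_int0[THEN conjunct1] exp_int0[THEN conjunct2]])
       (simp add: algebra_simps)
  note l1 = pareto_transfer[OF m f1[THEN conjunct1] f1[THEN conjunct2]]
  note l2 = pareto_transfer[OF m f2[THEN conjunct1] f2[THEN conjunct2]]
  have e2: "\<And>x. x \<in> {m..} \<Longrightarrow> ?g x * (ln (x / m) + ln m) = ?g x * ln x"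
    using m by (auto simp: ln_div)
  show ?thesis
  proof (rule logloss_lin3)
    show "{m..} \<in> sets borel" by simp
    show "continuous_on {m..} (\<lambda>x. ?g x * 1)" "continuous_on {m..} (\<lambda>x. ?g x * ln x)"
         "continuous_on {m..} (\<lambda>x. 0)"
      unfolding pareto_shape_dens_def using m by (intro continuous_intros; auto)+
    show "(\<lambda>x. ?g x * 1) absolutely_integrable_on {m..}" "integral {m..} (\<lambda>x. ?g x * 1) = 1" using l1 by auto
    show "(\<lambda>x. ?g x * ln x) absolutely_integrable_on {m..}" "integral {m..} (\<lambda>x. ?g x * ln x) = 1 + ln m"
      using l2 ai_cong[of "{m..}", OF e2] integral_cong[of "{m..}", OF e2] by auto
    show "(\<lambda>x. 0) absolutely_integrable_on {m..}" "integral {m..} (\<lambda>x. 0) = 0" by auto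
    fix x :: real assume x: "x \<in> {m..}"
    then have x0: "x > 0" using m by simp
    have lnf: "ln (pareto_shape_dens m \<theta> x) = ln \<theta> + \<theta> * ln m - (\<theta> + 1) * ln x"
      using x0 t m by (simp add: pareto_shape_dens_def ln_mult ln_powr algebra_simps)
    show "?g x * - ln (pareto_shape_dens m \<theta> x) = (- ln \<theta> - \<theta> * ln m) * (?g x * 1) + (\<theta> + 1) * (?g x * ln x) + 0 * 0"
      by (simp only: lnf) (simp add: algebra_simps)
  qed
qed

lemma pareto_main:
  fixes m \<theta> :: real assumes m: "m > 0" and t: "\<theta> > 1"
  shows "logloss {m..} (pareto_shape_dens m \<theta>) (pareto_shape_dens m 1)
       > logloss {m..} (pareto_shape_dens m (1 / \<theta>)) (pareto_shape_dens m 1)"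
proof -
  have "ln (1 / \<theta>) = - ln \<theta>" using t by (simp add: ln_div)
  then show ?thesis
    using pareto_logloss[OF m, of \<theta>] pareto_logloss[OF m, of "1 / \<theta>"] t key_ineq[OF t]
    by (simp add: algebra_simps)
qed

lemma pois_sum0: "(\<lambda>k. exp (-1) / fact k) sums (1::real)"
proof -
  have "(\<lambda>n. (1::real)^n /\<^sub>R fact n) sums exp 1" by (rule exp_converges)
  hence "(\<lambda>n. 1 / fact n) sums (exp (1::real))" by (simp add: divide_inverse)
  from sums_mult[OF this, of "exp (-1)"] show ?thesis by (simp add: exp_minus field_simps)
qed

lemma pois_sum1: "(\<lambda>k. real k * (exp (-1) / fact k)) sums (1::real)"
proof -
  have "(\<lambda>k. real (Suc k) * (exp (-1) / fact (Suc k))) = (\<lambda>k. exp (-1) / fact k)"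
  proof
    fix k
    have "real (Suc k) * (exp (-1) / fact (Suc k)) = real (Suc k) * (exp (-1) / (real (Suc k) * fact k))"
      by (simp only: fact_Suc of_nat_mult)
    also have "\<dots> = exp (-1) / fact k" by (simp del: of_nat_Suc)
    finally show "real (Suc k) * (exp (-1) / fact (Suc k)) = exp (-1) / fact k" .
  qed
  with pois_sum0 have "(\<lambda>k. real (Suc k) * (exp (-1) / fact (Suc k))) sums (1::real)" by simp
  then show ?thesis by (subst (asm) sums_Suc_iff) simp
qed

lemma ln_fact_le: "ln (fact k :: real) \<le> 4 ^ k"
proof (cases "k = 0")
  case False
  then have k: "k > 0" by simp
  have a: "ln (fact k :: real) \<le> ln (real k ^ k)"
    using k fact_le_power[of k, where 'a = real] by (subst ln_le_cancel_iff) auto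
  have b: "ln (real k ^ k) = k * ln (real k)" using k by (simp add: ln_realpow)
  have c: "ln (real k) \<le> real k" using ln_le_minus_one[of "real k"] k by auto
  have d: "real k * real k \<le> 4 ^ k"
  proof -
    have "k < 2 ^ k" by (rule less_exp)
    hence "real k < real (2 ^ k)" by (simp only: of_nat_less_iff)
    hence "real k \<le> 2 ^ k" by simp
    hence "real k * real k \<le> 2 ^ k * 2 ^ k" by (intro mult_mono) auto
    also have "(2::real) ^ k * 2 ^ k = 4 ^ k" by (simp add: power_mult_distrib[symmetric])
    finally show ?thesis .
  qed
  have e: "real k * ln (real k) \<le> real k * real k" using c by (intro mult_left_mono) auto
  show ?thesis using a b d e by linarith
qed simp

lemma pois_summ2: "summable (\<lambda>k. exp (-1) / fact k * ln (fact k :: real))"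
proof (rule summable_comparison_test'[where g = "\<lambda>k. exp (-1) * ((4::real) ^ k /\<^sub>R fact k)"])
  show "summable (\<lambda>k. exp (-1) * ((4::real) ^ k /\<^sub>R fact k))"
    by (intro summable_mult summable_exp_generic)
  fix n :: nat
  have "ln (fact n :: real) \<ge> 0" by simp
  then show "norm (exp (-1) / fact n * ln (fact n :: real)) \<le> exp (-1) * ((4::real) ^ n /\<^sub>R fact n)"
    using ln_fact_le[of n] by (simp add: divide_simps abs_mult)
qed

lemma poisson_logloss:
  fixes \<theta> :: real assumes t: "\<theta> > 0"
  shows "logloss_discrete (poisson_rate_pmf \<theta>) (poisson_rate_pmf 1) =
         \<theta> * 1 - ln \<theta> * 1 + (\<Sum>k. exp (-1) / fact k * ln (fact k :: real))"
proof -
  have eq: "poisson_rate_pmf 1 k * - ln (poisson_rate_pmf \<theta> k) =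
            \<theta> * (exp (-1) / fact k) - ln \<theta> * (real k * (exp (-1) / fact k)) + exp (-1) / fact k * ln (fact k)" for k
    using t by (simp add: poisson_rate_pmf_def ln_div ln_mult ln_realpow algebra_simps add_divide_distrib)
  have s: "(\<lambda>k. \<theta> * (exp (-1) / fact k) - ln \<theta> * (real k * (exp (-1) / fact k)) + exp (-1) / fact k * ln (fact k))
        sums (\<theta> * 1 - ln \<theta> * 1 + (\<Sum>k. exp (-1) / fact k * ln (fact k :: real)))"
    by (intro sums_add sums_diff sums_mult pois_sum0 pois_sum1 summable_sums pois_summ2)
  show ?thesis unfolding logloss_discrete_def eq using s by (rule sums_unique[symmetric])
qed

lemma poisson_main:
  fixes \<theta> :: real assumes t: "\<theta> > 1"
  shows "logloss_discrete (poisson_rate_pmf \<theta>) (poisson_rate_pmf 1)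
       > logloss_discrete (poisson_rate_pmf (1 / \<theta>)) (poisson_rate_pmf 1)"
proof -
  have "ln (1 / \<theta>) = - ln \<theta>" using t by (simp add: ln_div)
  then show ?thesis using poisson_logloss[of \<theta>] poisson_logloss[of "1 / \<theta>"] t key_ineq[OF t] by simp
qed

lemma exp_m1_bound:
  fixes u :: real
  shows "\<bar>exp u - 1\<bar> \<le> \<bar>u\<bar> * exp \<bar>u\<bar>"
proof (cases "u \<ge> 0")
  case True
  have "exp (- u) \<ge> 1 + (- u)" by (rule exp_ge_add_one_self)
  hence "exp u * exp (- u) \<ge> exp u * (1 - u)" by (intro mult_left_mono) auto
  hence "1 \<ge> exp u * (1 - u)" by (simp add: exp_minus)
  then show ?thesis using True by (simp add: algebra_simps)
next
  case False
  have a: "1 + u \<le> exp u" by (rule exp_ge_add_one_self)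
  have b: "exp u \<le> 1" using False by simp
  have c: "\<bar>u\<bar> \<le> \<bar>u\<bar> * exp \<bar>u\<bar>" using mult_left_mono[of 1 "exp \<bar>u\<bar>" "\<bar>u\<bar>"] by simp
  have d: "\<bar>exp u - 1\<bar> = 1 - exp u" using b by simp
  have e: "\<bar>u\<bar> = - u" using False by simp
  show ?thesis using a c d e by linarith
qed

lemma dq_bound:
  fixes x h \<eta> :: real
  assumes x: "x > 0" and h: "0 < h" "h \<le> \<eta>"
  shows "\<bar>(x powr h - 1) / h\<bar> \<le> (x powr (2 * \<eta>) + x powr (- (2 * \<eta>))) / \<eta>"
proof -
  define t where "t = ln x"
  have e: "\<eta> > 0" using h by simp
  have "\<bar>(x powr h - 1) / h\<bar> = \<bar>exp (h * t) - 1\<bar> / h"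
    using x h by (simp add: powr_def t_def abs_divide)
  also have "\<dots> \<le> (\<bar>h * t\<bar> * exp \<bar>h * t\<bar>) / h"
    using h by (intro divide_right_mono exp_m1_bound) auto
  also have "\<dots> = \<bar>t\<bar> * exp (h * \<bar>t\<bar>)" using h by (simp add: abs_mult)
  also have "\<dots> \<le> \<bar>t\<bar> * exp (\<eta> * \<bar>t\<bar>)"
    using h by (intro mult_left_mono) (auto intro: mult_right_mono)
  also have "\<eta> * \<bar>t\<bar> \<le> exp (\<eta> * \<bar>t\<bar>)" using exp_ge_add_one_self[of "\<eta> * \<bar>t\<bar>"] by linarith
  hence "\<bar>t\<bar> \<le> exp (\<eta> * \<bar>t\<bar>) / \<eta>" using e by (simp add: field_simps)
  hence "\<bar>t\<bar> * exp (\<eta> * \<bar>t\<bar>) \<le> exp (\<eta> * \<bar>t\<bar>) / \<eta> * exp (\<eta> * \<bar>t\<bar>)"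
    by (intro mult_right_mono) auto
  also have "\<dots> = exp (2 * \<eta> * \<bar>t\<bar>) / \<eta>" by (simp add: exp_add[symmetric])
  also have "exp (2 * \<eta> * \<bar>t\<bar>) \<le> exp (2 * \<eta> * t) + exp (- (2 * \<eta>) * t)"
    using e by (cases "t \<ge> 0") (auto simp: add_increasing add_increasing2)
  hence "exp (2 * \<eta> * \<bar>t\<bar>) / \<eta> \<le> (exp (2 * \<eta> * t) + exp (- (2 * \<eta>) * t)) / \<eta>"
    using e by (intro divide_right_mono) auto
  also have "exp (2 * \<eta> * t) + exp (- (2 * \<eta>) * t) = x powr (2 * \<eta>) + x powr (- (2 * \<eta>))"
    using x by (simp add: powr_def t_def mult_ac)
  finally show ?thesis .
qed

lemma deriv_seq:
  fixes f :: "real \<Rightarrow> real"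
  assumes d: "(f has_real_derivative D) (at 0)" and h: "h \<longlonglongrightarrow> 0" and nz: "\<And>n. h n \<noteq> 0"
  shows "(\<lambda>n. (f (h n) - f 0) / h n) \<longlonglongrightarrow> D"
proof -
  have "((\<lambda>y. (f y - f 0) / (y - 0)) \<longlongrightarrow> D) (at 0)"
    using d by (simp add: has_field_derivative_iff)
  moreover have "filterlim h (at 0) sequentially"
    using h nz by (simp add: filterlim_at)
  ultimately have "(\<lambda>n. (\<lambda>y. (f y - f 0) / (y - 0)) (h n)) \<longlonglongrightarrow> D"
    by (rule filterlim_compose)
  then show ?thesis by simp
qed

lemma powr_deriv_h:
  fixes x :: real assumes x: "x > 0"
  shows "((\<lambda>h. x powr h) has_real_derivative ln x) (at 0)"
proof -
  have "((\<lambda>h. exp (h * ln x)) has_real_derivative exp (0 * ln x) * ln x) (at 0)"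
    by (auto intro!: derivative_eq_intros)
  then show ?thesis using x by (simp add: powr_def)
qed

lemma deriv_under:
  fixes w F :: "real \<Rightarrow> real" and F' \<delta> :: real
  assumes S: "S \<subseteq> {0<..}" "S \<in> sets lebesgue" and c: "continuous_on S w"
    and nn: "\<And>x. x \<in> S \<Longrightarrow> w x \<ge> 0" and d: "\<delta> > 0"
    and ai: "\<And>h. \<bar>h\<bar> \<le> \<delta> \<Longrightarrow> (\<lambda>x. w x * x powr h) absolutely_integrable_on S \<and>
                                 integral S (\<lambda>x. w x * x powr h) = F h"
    and der: "(F has_real_derivative F') (at 0)"
  shows "(\<lambda>x. w x * ln x) absolutely_integrable_on S \<and> integral S (\<lambda>x. w x * ln x) = F'"
proof
  show ai_ln: "(\<lambda>x. w x * ln x) absolutely_integrable_on S"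
    by (rule ln_ai[OF S c nn d]) (use ai[of \<delta>] ai[of "- \<delta>"] d in auto)
  define \<eta> where "\<eta> = \<delta> / 2"
  have e: "\<eta> > 0" using d by (simp add: \<eta>_def)
  define hs where "hs = (\<lambda>n::nat. \<eta> / (real n + 1))"
  have hs_pos: "hs n > 0" for n using e by (simp add: hs_def)
  have hs_le: "hs n \<le> \<eta>" for n using e by (simp add: hs_def field_simps)
  have hs_lim: "hs \<longlonglongrightarrow> 0"
  proof -
    have "(\<lambda>n. \<eta> * inverse (real (Suc n))) \<longlonglongrightarrow> \<eta> * 0"
      by (intro tendsto_mult tendsto_const LIMSEQ_inverse_real_of_nat)
    then show ?thesis by (simp add: hs_def divide_inverse add.commute)
  qed
  define fk where "fk = (\<lambda>n x. (1 / hs n) * (w x * x powr hs n) + (- 1 / hs n) * (w x * x powr 0))"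
  have w0: "(\<lambda>x. w x * x powr 0) absolutely_integrable_on S \<and> integral S (\<lambda>x. w x * x powr 0) = F 0"
    using ai[of 0] d by simp
  have fk_int: "(fk n) absolutely_integrable_on S \<and> integral S (fk n) = (1 / hs n) * F (hs n) + (- 1 / hs n) * F 0" for n
  proof -
    have a: "\<bar>hs n\<bar> \<le> \<delta>" using hs_pos[of n] hs_le[of n] by (simp add: \<eta>_def)
    show ?thesis
      by (rule lin2[OF ai[OF a, THEN conjunct1] ai[OF a, THEN conjunct2] w0[THEN conjunct1] w0[THEN conjunct2]])
         (simp add: fk_def)
  qed
  define B where "B = (\<lambda>x. (w x * x powr (2 * \<eta>) + w x * x powr (- (2 * \<eta>))) / \<eta>)"
  have B_int: "B integrable_on S"
  proof -
    have "\<bar>2 * \<eta>\<bar> \<le> \<delta>" "\<bar>- (2 * \<eta>)\<bar> \<le> \<delta>" using e by (auto simp: \<eta>_def)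
    then show ?thesis unfolding B_def using ai
      by (intro ai_int set_integrable_divide set_integral_add) auto
  qed
  have fk_eq: "fk n x = w x * ((x powr hs n - 1) / hs n)" if "x \<in> S" for n x
    using that S hs_pos[of n] by (auto simp: fk_def field_simps)
  have le: "norm (fk n x) \<le> B x" if x: "x \<in> S" for n x
  proof -
    have x0: "x > 0" using x S by auto
    have "norm (fk n x) = w x * \<bar>(x powr hs n - 1) / hs n\<bar>"
      using fk_eq[OF x] nn[OF x] by (simp add: abs_mult)
    also have "\<dots> \<le> w x * ((x powr (2 * \<eta>) + x powr (- (2 * \<eta>))) / \<eta>)"
      by (intro mult_left_mono dq_bound x0 hs_pos hs_le nn x)
    also have "\<dots> = B x" by (simp add: B_def field_simps)
    finally show ?thesis .
  qed
  have conv: "(\<lambda>n. fk n x) \<longlonglongrightarrow> w x * ln x" if x: "x \<in> S" for x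
  proof -
    have x0: "x > 0" using x S by auto
    have "(\<lambda>n. ((\<lambda>h. x powr h) (hs n) - (\<lambda>h. x powr h) 0) / hs n) \<longlonglongrightarrow> ln x"
      by (rule deriv_seq[OF powr_deriv_h[OF x0] hs_lim]) (use hs_pos in \<open>simp add: less_imp_neq[symmetric]\<close>)
    hence "(\<lambda>n. w x * ((x powr hs n - 1) / hs n)) \<longlonglongrightarrow> w x * ln x"
      using x0 by (intro tendsto_mult tendsto_const) simp
    then show ?thesis using fk_eq[OF x] by simp
  qed
  have dc: "(\<lambda>n. integral S (fk n)) \<longlonglongrightarrow> integral S (\<lambda>x. w x * ln x)"
    by (rule dominated_convergence(2)[OF _ B_int le conv]) (use fk_int ai_int in blast)+
  have "(\<lambda>n. integral S (fk n)) \<longlonglongrightarrow> F'"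
  proof -
    have "(\<lambda>n. (F (hs n) - F 0) / hs n) \<longlonglongrightarrow> F'"
      by (rule deriv_seq[OF der hs_lim]) (use hs_pos in \<open>simp add: less_imp_neq[symmetric]\<close>)
    moreover have "integral S (fk n) = (F (hs n) - F 0) / hs n" for n
      using fk_int[of n] by (simp add: diff_divide_distrib)
    ultimately show ?thesis by simp
  qed
  with dc show "integral S (\<lambda>x. w x * ln x) = F'" by (rule LIMSEQ_unique)
qed

lemma psi_sums:
  fixes u :: real assumes u: "u > 0"
  shows "(\<lambda>k. inverse (real (Suc k)) - inverse (u + real k)) sums (Digamma u + euler_mascheroni)"
proof -
  have "summable (\<lambda>k. inverse (real (Suc k)) - inverse (u + real k))"
    using summable_Digamma[of u] u by simp
  then show ?thesis by (simp add: Digamma_def summable_sums)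
qed

lemma psi_diff:
  fixes u v :: real assumes u: "u > 0" and v: "v > 0"
  shows "(\<lambda>k. 1 / (v + real k) - 1 / (u + real k)) sums (Digamma u - Digamma v)"
  using sums_diff[OF psi_sums[OF u] psi_sums[OF v]] by (simp add: divide_inverse)

lemma gg_term:
  fixes a t k :: real assumes a: "a > 0" and t: "t > 1" and k: "k \<ge> 0"
  shows "t\<^sup>2 * (1 / (a + k) - 1 / (a * t + k)) - (1 / (a / t + k) - 1 / (a + k)) > 0"
proof -
  have p1: "a + k > 0" "a * t + k > 0" "a + k * t > 0" using a t k by (auto intro: add_pos_nonneg)
  have e1: "1 / (a + k) - 1 / (a * t + k) = a * (t - 1) / ((a + k) * (a * t + k))"
    using p1 by (simp add: field_simps)
  have e2: "1 / (a / t + k) - 1 / (a + k) = a * (t - 1) / ((a + k * t) * (a + k))"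
    using p1 t by (simp add: field_simps)
  have ineq: "t\<^sup>2 * (a + k * t) > a * t + k"
  proof -
    have "t\<^sup>2 * (a + k * t) - (a * t + k) = a * t * (t - 1) + k * (t ^ 3 - 1)"
      by (simp add: algebra_simps power2_eq_square power3_eq_cube)
    moreover have "a * t * (t - 1) > 0" using a t by simp
    moreover have "k * (t ^ 3 - 1) \<ge> 0" using k t by (simp add: one_le_power less_imp_le)
    ultimately show ?thesis by linarith
  qed
  have "t\<^sup>2 / (a * t + k) > 1 / (a + k * t)"
    using ineq p1 by (simp add: field_simps)
  hence "a * (t - 1) / (a + k) * (t\<^sup>2 / (a * t + k)) > a * (t - 1) / (a + k) * (1 / (a + k * t))"
    using a t p1 by (intro mult_strict_left_mono) auto
  then show ?thesis unfolding e1 e2 using p1 by (simp add: field_simps)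
qed

lemma gg_digamma_ineq:
  fixes a \<theta> :: real assumes a: "a > 0" and th: "\<theta> > 1"
  shows "ln_Gamma (a * \<theta>) - ln_Gamma (a / \<theta>) - a * (\<theta> - 1 / \<theta>) * Digamma a > 0"
proof -
  define G where "G = (\<lambda>t. ln_Gamma (a * t) - ln_Gamma (a / t) - a * (t - 1 / t) * Digamma a)"
  have "G 1 < G \<theta>"
  proof (rule DERIV_pos_imp_increasing_open[OF th])
    fix t :: real assume t: "1 < t" "t < \<theta>"
    have at: "a * t > 0" "a / t > 0" using a t by auto
    have d: "(G has_real_derivative
        a * Digamma (a * t) + a / t\<^sup>2 * Digamma (a / t) - a * (1 + 1 / t\<^sup>2) * Digamma a) (at t)"
      unfolding G_def using at t
      by (auto intro!: derivative_eq_intros simp: power2_eq_square field_simps)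
    have s: "(\<lambda>k. t\<^sup>2 * (1 / (a + real k) - 1 / (a * t + real k)) - (1 / (a / t + real k) - 1 / (a + real k)))
             sums (t\<^sup>2 * (Digamma (a * t) - Digamma a) - (Digamma a - Digamma (a / t)))"
      by (intro sums_diff sums_mult psi_diff at a)
    have pos: "0 < t\<^sup>2 * (Digamma (a * t) - Digamma a) - (Digamma a - Digamma (a / t))"
      using suminf_pos[OF sums_summable[OF s]] gg_term[OF a, of t] t sums_unique[OF s] by auto
    have "a * Digamma (a * t) + a / t\<^sup>2 * Digamma (a / t) - a * (1 + 1 / t\<^sup>2) * Digamma a
        = a / t\<^sup>2 * (t\<^sup>2 * (Digamma (a * t) - Digamma a) - (Digamma a - Digamma (a / t)))"
      using t by (simp add: field_simps)
    moreover have "a / t\<^sup>2 * (t\<^sup>2 * (Digamma (a * t) - Digamma a) - (Digamma a - Digamma (a / t))) > 0"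
      using pos a t by simp
    ultimately show "\<exists>y. (G has_real_derivative y) (at t) \<and> 0 < y" using d by auto
  next
    show "continuous_on {1..\<theta>} G"
    proof (rule DERIV_continuous_on)
      fix t assume t: "t \<in> {1..\<theta>}"
      then have at: "a * t > 0" "a / t > 0" using a by auto
      show "(G has_field_derivative
        (a * Digamma (a * t) + a / t\<^sup>2 * Digamma (a / t) - a * (1 + 1 / t\<^sup>2) * Digamma a)) (at t within {1..\<theta>})"
        unfolding G_def using at t
        by (auto intro!: derivative_eq_intros simp: power2_eq_square field_simps)
    qed
  qed
  then show ?thesis by (simp add: G_def)
qed

definition Kf :: "real \<Rightarrow> real \<Rightarrow> real" where
  "Kf t m = t\<^sup>2 * (1 / (1 + m) - 1 / (t + m)) + (1 / (1 + m) - 1 / (1 / t + m))"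

lemma frac2: "(a::real) \<noteq> 0 \<Longrightarrow> b \<noteq> 0 \<Longrightarrow> c \<noteq> 0 \<Longrightarrow> x / (a * b) + y / (a * c) = (x * c + y * b) / (a * b * c)"
  by (simp add: field_simps)

lemma Kf_alt:
  fixes t m :: real assumes t: "t > 1" and m: "m \<ge> 0"
  shows "Kf t m = (t - 1)\<^sup>2 * ((t\<^sup>2 + t + 1) * m + t) / ((1 + m) * (t + m) * (1 + m * t))"
proof -
  have p: "1 + m > 0" "t + m > 0" "1 + m * t > 0" using t m by (auto intro: add_pos_nonneg)
  have q: "1 / t + m = (1 + m * t) / t" using t by (simp add: field_simps)
  have e1: "1 / (1 + m) - 1 / (t + m) = (t - 1) / ((1 + m) * (t + m))"
    using p by (simp add: field_simps)
  have e2: "1 / (1 + m) - 1 / (1 / t + m) = (1 - t) / ((1 + m) * (1 + m * t))"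
    unfolding q using p t by (simp add: field_simps)
  have "Kf t m = (t\<^sup>2 * (t - 1)) / ((1 + m) * (t + m)) + (1 - t) / ((1 + m) * (1 + m * t))"
    unfolding Kf_def e1 e2 by simp
  also have "\<dots> = ((t\<^sup>2 * (t - 1)) * (1 + m * t) + (1 - t) * (t + m)) / ((1 + m) * (t + m) * (1 + m * t))"
    using p by (intro frac2) auto
  also have "(t\<^sup>2 * (t - 1)) * (1 + m * t) + (1 - t) * (t + m) = (t - 1)\<^sup>2 * ((t\<^sup>2 + t + 1) * m + t)"
    by (simp add: algebra_simps power2_eq_square)
  finally show ?thesis .
qed

lemma Kf_dec:
  fixes t m1 m2 :: real assumes t: "t > 1" and m1: "m1 \<ge> 0" and m12: "m1 < m2"
  shows "Kf t m2 < Kf t m1"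
proof -
  have m2: "m2 > 0" using m1 m12 by simp
  define A where "A = t\<^sup>2 + t + 1"
  define P where "P = (\<lambda>m::real. (1 + m) * (t + m) * (1 + m * t))"
  have A: "A > 0" using t by (simp add: A_def add_pos_pos)
  have P: "P m > 0" if "m \<ge> 0" for m using t that by (simp add: P_def add_pos_nonneg)
  have delta: "(A * m1 + t) * P m2 - (A * m2 + t) * P m1 =
    (m2 - m1) * (t * A * m1 * m2 * (m1 + m2) + t\<^sup>2 * (m2\<^sup>2 + m1 * m2 + m1\<^sup>2) + A\<^sup>2 * m1 * m2 + t * A * (m1 + m2))"
    unfolding P_def A_def by (simp add: algebra_simps power2_eq_square power3_eq_cube)
  have "t * A * m1 * m2 * (m1 + m2) \<ge> 0" "A\<^sup>2 * m1 * m2 \<ge> 0" "t * A * (m1 + m2) \<ge> 0"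
    using t A m1 m2 by auto
  moreover have "t\<^sup>2 * (m2\<^sup>2 + m1 * m2 + m1\<^sup>2) > 0" using t m1 m2 by (intro mult_pos_pos add_pos_nonneg) auto
  ultimately have "(A * m1 + t) * P m2 - (A * m2 + t) * P m1 > 0"
    unfolding delta using m12 by (intro mult_pos_pos) auto
  hence "(A * m2 + t) / P m2 < (A * m1 + t) / P m1"
    using P[OF m1] P[of m2] m2 by (simp add: field_simps)
  hence "(t - 1)\<^sup>2 * ((A * m2 + t) / P m2) < (t - 1)\<^sup>2 * ((A * m1 + t) / P m1)"
    using t by (intro mult_strict_left_mono) auto
  then show ?thesis using Kf_alt[OF t m1] Kf_alt[OF t, of m2] m2 by (simp add: A_def P_def)
qed

lemma beta_digamma_ineq:
  fixes \<beta> \<theta> :: real assumes b: "\<beta> > 0" and th: "\<theta> > 1"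
  shows "ln_Gamma \<theta> - ln_Gamma (1 / \<theta>) - ln_Gamma (\<theta> + \<beta>) + ln_Gamma (1 / \<theta> + \<beta>)
         + (\<theta> - 1 / \<theta>) * (Digamma (1 + \<beta>) - Digamma 1) > 0"
proof -
  define c where "c = Digamma (1 + \<beta>) - Digamma (1::real)"
  define H where "H = (\<lambda>t. ln_Gamma t - ln_Gamma (1 / t) - ln_Gamma (t + \<beta>) + ln_Gamma (1 / t + \<beta>)
         + (t - 1 / t) * c)"
  define H' where "H' = (\<lambda>t. Digamma t + Digamma (1 / t) / t\<^sup>2 - Digamma (t + \<beta>) - Digamma (1 / t + \<beta>) / t\<^sup>2
         + (1 + 1 / t\<^sup>2) * c)"
  have d: "(H has_real_derivative H' t) (at t within X)" if t: "t \<ge> 1" for t X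
  proof -
    have t0: "t > 0" using t by simp
    have it: "1 / t > 0" using t0 by simp
    have p: "t > 0" "1 / t > 0" "t + \<beta> > 0" "1 / t + \<beta> > 0" using t0 b it by (auto intro: add_pos_pos)
    show ?thesis unfolding H_def H'_def using p
      by (auto intro!: derivative_eq_intros simp: power2_eq_square field_simps)
  qed
  have "H 1 < H \<theta>"
  proof (rule DERIV_pos_imp_increasing_open[OF th])
    fix t :: real assume t: "1 < t" "t < \<theta>"
    have it: "1 / t > 0" using t by simp
    have p: "t > 0" "1 / t > 0" "t + \<beta> > 0" "1 / t + \<beta> > 0" "1 + \<beta> > 0" using t b it by (auto intro: add_pos_pos)
    have s: "(\<lambda>k. t\<^sup>2 * ((1 / (t + \<beta> + real k) - 1 / (1 + \<beta> + real k)) - (1 / (t + real k) - 1 / (1 + real k)))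
              + ((1 / (1 / t + \<beta> + real k) - 1 / (1 + \<beta> + real k)) - (1 / (1 / t + real k) - 1 / (1 + real k))))
        sums (t\<^sup>2 * ((Digamma (1 + \<beta>) - Digamma (t + \<beta>)) - (Digamma 1 - Digamma t))
              + ((Digamma (1 + \<beta>) - Digamma (1 / t + \<beta>)) - (Digamma 1 - Digamma (1 / t))))"
      by (intro sums_add sums_diff sums_mult psi_diff p zero_less_one)
    have trm: "t\<^sup>2 * ((1 / (t + \<beta> + real k) - 1 / (1 + \<beta> + real k)) - (1 / (t + real k) - 1 / (1 + real k)))
              + ((1 / (1 / t + \<beta> + real k) - 1 / (1 + \<beta> + real k)) - (1 / (1 / t + real k) - 1 / (1 + real k))) > 0" for k
    proof -
      have "Kf t (real k + \<beta>) < Kf t (real k)" using t b by (intro Kf_dec) auto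
      then show ?thesis by (simp add: Kf_def algebra_simps)
    qed
    have pos: "0 < t\<^sup>2 * ((Digamma (1 + \<beta>) - Digamma (t + \<beta>)) - (Digamma 1 - Digamma t))
              + ((Digamma (1 + \<beta>) - Digamma (1 / t + \<beta>)) - (Digamma 1 - Digamma (1 / t)))"
      using suminf_pos[OF sums_summable[OF s]] trm sums_unique[OF s] by auto
    have "H' t = (t\<^sup>2 * ((Digamma (1 + \<beta>) - Digamma (t + \<beta>)) - (Digamma 1 - Digamma t))
              + ((Digamma (1 + \<beta>) - Digamma (1 / t + \<beta>)) - (Digamma 1 - Digamma (1 / t)))) / t\<^sup>2"
      using t by (simp add: H'_def c_def field_simps)
    hence "H' t > 0" using pos t by simp
    then show "\<exists>y. (H has_real_derivative y) (at t) \<and> 0 < y" using d[of t UNIV] t by auto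
  next
    show "continuous_on {1..\<theta>} H"
      by (rule DERIV_continuous_on[OF d]) auto
  qed
  then show ?thesis by (simp add: H_def c_def)
qed

lemma ai_eq:
  fixes f g :: "real \<Rightarrow> real"
  assumes "f absolutely_integrable_on S \<and> integral S f = b" "\<And>x. x \<in> S \<Longrightarrow> g x = f x"
  shows "g absolutely_integrable_on S \<and> integral S g = b"
  using assms ai_cong[of S g f] integral_cong[of S g f] by auto

lemma Gamma_ne0:
  fixes x :: real assumes "x > 0" shows "Gamma x \<noteq> 0"
  using Gamma_pos_real[OF assms] by simp

lemma ggshape_J:
  fixes \<sigma> \<gamma> :: real assumes s: "\<sigma> > 0" and g: "\<gamma> > 0"
  shows "(\<lambda>x. exp (- ((x / \<sigma>) powr \<gamma>)) * ln x) absolutely_integrable_on {0<..} \<and>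
         integral {0<..} (\<lambda>x. exp (- ((x / \<sigma>) powr \<gamma>)) * ln x) =
         (\<sigma> powr (0 + 1) * ln \<sigma> * Gamma ((0 + 1) / \<gamma>) + \<sigma> powr (0 + 1) * (Gamma ((0 + 1) / \<gamma>) * Digamma ((0 + 1) / \<gamma>) * (1 / \<gamma>))) / \<gamma>"
proof (rule deriv_under[where \<delta> = "1/2" and F = "\<lambda>h. \<sigma> powr (h + 1) * Gamma ((h + 1) / \<gamma>) / \<gamma>"])
  show "continuous_on {0<..} (\<lambda>x. exp (- ((x / \<sigma>) powr \<gamma>)))"
    using s by (intro continuous_intros) auto
  fix h :: real assume h: "\<bar>h\<bar> \<le> 1 / 2"
  show "(\<lambda>x. exp (- ((x / \<sigma>) powr \<gamma>)) * x powr h) absolutely_integrable_on {0<..} \<and>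
        integral {0<..} (\<lambda>x. exp (- ((x / \<sigma>) powr \<gamma>)) * x powr h) = \<sigma> powr (h + 1) * Gamma ((h + 1) / \<gamma>) / \<gamma>"
    by (rule ai_eq[OF gengamma_moment[OF g s]]) (use h in auto)
next
  have nz: "(0 + 1) / \<gamma> \<notin> \<int>\<^sub>\<le>\<^sub>0"
  proof
    assume "(0 + 1) / \<gamma> \<in> \<int>\<^sub>\<le>\<^sub>0"
    then have "(0 + 1) / \<gamma> \<le> 0" by (rule nonpos_Ints_nonpos)
    then show False using g by simp
  qed
  show "((\<lambda>h. \<sigma> powr (h + 1) * Gamma ((h + 1) / \<gamma>) / \<gamma>) has_real_derivative
    (\<sigma> powr (0 + 1) * ln \<sigma> * Gamma ((0 + 1) / \<gamma>) + \<sigma> powr (0 + 1) * (Gamma ((0 + 1) / \<gamma>) * Digamma ((0 + 1) / \<gamma>) * (1 / \<gamma>))) / \<gamma>) (at 0)"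
    using s g nz
    by (auto intro!: derivative_eq_intros DERIV_chain2[OF has_field_derivative_Gamma] simp: field_simps)
qed (use s g in auto)

lemma ggsh_c:
  fixes \<gamma> \<sigma> s c :: real
  assumes g: "\<gamma> > 0" and sg: "\<sigma> > 0" and s: "s > -1"
    and h: "\<And>x. x > 0 \<Longrightarrow> h x = c * (x powr s * exp (- ((x / \<sigma>) powr \<gamma>)))"
  shows "h absolutely_integrable_on {0<..} \<and> integral {0<..} h = c * (\<sigma> powr (s + 1) * Gamma ((s + 1) / \<gamma>) / \<gamma>)"
proof (rule ai_eq[OF _ h])
  show "(\<lambda>x. c * (x powr s * exp (- ((x / \<sigma>) powr \<gamma>)))) absolutely_integrable_on {0<..} \<and>
        integral {0<..} (\<lambda>x. c * (x powr s * exp (- ((x / \<sigma>) powr \<gamma>)))) = c * (\<sigma> powr (s + 1) * Gamma ((s + 1) / \<gamma>) / \<gamma>)"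
    using gengamma_moment[OF g sg s] by auto
qed auto

lemma ggshape_logloss:
  fixes \<sigma> \<gamma> \<theta> :: real assumes s: "\<sigma> > 0" and g: "\<gamma> > 0" and t: "\<theta> > 0"
  shows "logloss {0<..} (gengamma_shape_dens \<sigma> \<gamma> \<theta>) (gengamma_shape_dens \<sigma> \<gamma> 1) =
    (- ln \<gamma> + ln (Gamma (\<theta> / \<gamma>)) + \<theta> * ln \<sigma>) * 1 + (- (\<theta> - 1)) * (ln \<sigma> + Digamma (1 / \<gamma>) / \<gamma>)
    + 1 * integral {0<..} (\<lambda>x. gengamma_shape_dens \<sigma> \<gamma> 1 x * (x / \<sigma>) powr \<gamma>)"
proof -
  define G where "G = Gamma (1 / \<gamma>)"
  have G: "G > 0" using g by (simp add: G_def Gamma_pos_real)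
  define c where "c = \<gamma> / (G * \<sigma>)"
  let ?g = "gengamma_shape_dens \<sigma> \<gamma> 1"
  have gx: "?g x = c * exp (- ((x / \<sigma>) powr \<gamma>))" if "x > 0" for x
    using that s by (simp add: gengamma_shape_dens_def c_def G_def)
  have i1: "?g absolutely_integrable_on {0<..} \<and> integral {0<..} ?g = c * (\<sigma> powr (0 + 1) * Gamma ((0 + 1) / \<gamma>) / \<gamma>)"
    by (rule ggsh_c[OF g s]) (auto simp: gx)
  have e1: "c * (\<sigma> powr (0 + 1) * Gamma ((0 + 1) / \<gamma>) / \<gamma>) = 1"
    using G g s by (simp add: c_def G_def[symmetric])
  have i3: "(\<lambda>x. ?g x * (x / \<sigma>) powr \<gamma>) absolutely_integrable_on {0<..}"
  proof (rule ggsh_c[OF g s, of \<gamma> _ "c / \<sigma> powr \<gamma>", THEN conjunct1])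
    show "\<gamma> > -1" using g by simp
    fix x :: real assume x: "x > 0"
    then show "?g x * (x / \<sigma>) powr \<gamma> = c / \<sigma> powr \<gamma> * (x powr \<gamma> * exp (- ((x / \<sigma>) powr \<gamma>)))"
      using s by (simp add: gx powr_divide)
  qed
  define V where "V = (\<sigma> powr (0 + 1) * ln \<sigma> * Gamma ((0 + 1) / \<gamma>) + \<sigma> powr (0 + 1) * (Gamma ((0 + 1) / \<gamma>) * Digamma ((0 + 1) / \<gamma>) * (1 / \<gamma>))) / \<gamma>"
  have J1: "(\<lambda>x. exp (- ((x / \<sigma>) powr \<gamma>)) * ln x) absolutely_integrable_on {0<..}"
   and J2: "integral {0<..} (\<lambda>x. exp (- ((x / \<sigma>) powr \<gamma>)) * ln x) = V"
    using ggshape_J[OF s g] unfolding V_def by auto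
  have cv: "c * V = ln \<sigma> + Digamma (1 / \<gamma>) / \<gamma>"
  proof -
    have G0: "Gamma (1 / \<gamma>) \<noteq> 0" using G by (simp add: G_def)
    show ?thesis using G0 g s by (simp add: c_def G_def V_def field_simps)
  qed
  have i2: "(\<lambda>x. ?g x * ln x) absolutely_integrable_on {0<..} \<and>
           integral {0<..} (\<lambda>x. ?g x * ln x) = ln \<sigma> + Digamma (1 / \<gamma>) / \<gamma>"
  proof (rule ai_eq[OF _ ])
    have "integral {0<..} (\<lambda>x. c * (exp (- ((x / \<sigma>) powr \<gamma>)) * ln x)) =
          c * integral {0<..} (\<lambda>x. exp (- ((x / \<sigma>) powr \<gamma>)) * ln x)" by (rule hk_mult)
    then show "(\<lambda>x. c * (exp (- ((x / \<sigma>) powr \<gamma>)) * ln x)) absolutely_integrable_on {0<..} \<and>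
           integral {0<..} (\<lambda>x. c * (exp (- ((x / \<sigma>) powr \<gamma>)) * ln x)) = ln \<sigma> + Digamma (1 / \<gamma>) / \<gamma>"
      using J1 J2 cv by auto
  qed (simp add: gx)
  show ?thesis
  proof (rule logloss_lin3)
    show "{0::real<..} \<in> sets borel" by simp
    show "continuous_on {0<..} ?g" "continuous_on {0<..} (\<lambda>x. ?g x * ln x)"
         "continuous_on {0<..} (\<lambda>x. ?g x * (x / \<sigma>) powr \<gamma>)"
      unfolding gengamma_shape_dens_def using G s by (intro continuous_intros; auto simp: G_def)+
    show "?g absolutely_integrable_on {0<..}" "integral {0<..} ?g = 1" using i1 e1 by auto
    show "(\<lambda>x. ?g x * ln x) absolutely_integrable_on {0<..}"
         "integral {0<..} (\<lambda>x. ?g x * ln x) = ln \<sigma> + Digamma (1 / \<gamma>) / \<gamma>" using i2 by auto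
    show "(\<lambda>x. ?g x * (x / \<sigma>) powr \<gamma>) absolutely_integrable_on {0<..}" by (rule i3)
    show "integral {0<..} (\<lambda>x. ?g x * (x / \<sigma>) powr \<gamma>) = integral {0<..} (\<lambda>x. ?g x * (x / \<sigma>) powr \<gamma>)" ..
    fix x :: real assume x: "x \<in> {0<..}"
    have Gt: "Gamma (\<theta> / \<gamma>) > 0" using t g by (simp add: Gamma_pos_real)
    have lnf: "ln (gengamma_shape_dens \<sigma> \<gamma> \<theta> x) =
          ln \<gamma> + (\<theta> - 1) * ln x - (x / \<sigma>) powr \<gamma> - ln (Gamma (\<theta> / \<gamma>)) - \<theta> * ln \<sigma>"
      using x g t s Gt less_imp_neq[OF Gt, symmetric] unfolding gengamma_shape_dens_def
      by (simp add: ln_mult ln_div ln_powr)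
    show "?g x * - ln (gengamma_shape_dens \<sigma> \<gamma> \<theta> x) =
      (- ln \<gamma> + ln (Gamma (\<theta> / \<gamma>)) + \<theta> * ln \<sigma>) * ?g x + (- (\<theta> - 1)) * (?g x * ln x) +
      1 * (?g x * (x / \<sigma>) powr \<gamma>)"
      by (simp only: lnf) (simp add: algebra_simps)
  qed
qed

lemma ggshape_main:
  fixes \<sigma> \<gamma> \<theta> :: real assumes s: "\<sigma> > 0" and g: "\<gamma> > 0" and t: "\<theta> > 1"
  shows "logloss {0<..} (gengamma_shape_dens \<sigma> \<gamma> \<theta>) (gengamma_shape_dens \<sigma> \<gamma> 1)
       > logloss {0<..} (gengamma_shape_dens \<sigma> \<gamma> (1 / \<theta>)) (gengamma_shape_dens \<sigma> \<gamma> 1)"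
proof -
  define a where "a = 1 / \<gamma>"
  have a: "a > 0" using g by (simp add: a_def)
  have ineq: "ln_Gamma (a * \<theta>) - ln_Gamma (a / \<theta>) - a * (\<theta> - 1 / \<theta>) * Digamma a > 0"
    by (rule gg_digamma_ineq[OF a t])
  have e1: "ln (Gamma (\<theta> / \<gamma>)) = ln_Gamma (a * \<theta>)"
    using g t by (simp add: a_def ln_Gamma_real_pos)
  have e2: "ln (Gamma (1 / \<theta> / \<gamma>)) = ln_Gamma (a / \<theta>)"
    using g t by (simp add: a_def ln_Gamma_real_pos mult.commute)
  have e3: "Digamma (1 / \<gamma>) / \<gamma> = a * Digamma a" by (simp add: a_def)
  show ?thesis
    using ggshape_logloss[OF s g, of \<theta>] ggshape_logloss[OF s g, of "1 / \<theta>"] t ineq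
    unfolding e1 e2 e3 by (simp add: algebra_simps)
qed

lemma beta_int:
  fixes a b :: real assumes a: "a > 0" and b: "b > 0"
  shows "(\<lambda>t. t powr (a - 1) * (1 - t) powr (b - 1)) absolutely_integrable_on {0<..<1} \<and>
         integral {0<..<1} (\<lambda>t. t powr (a - 1) * (1 - t) powr (b - 1)) = Beta a b"
proof -
  have h: "((\<lambda>t. t powr (a - 1) * (1 - t) powr (b - 1)) has_integral Beta a b) {0..1}"
    by (rule has_integral_Beta_real[OF a b])
  have n1: "negligible {x \<in> {0..1} - {0<..<1}. x powr (a - 1) * (1 - x) powr (b - 1) \<noteq> 0}"
    by (rule negligible_subset[of "{0,1}"]) auto
  have n2: "negligible {x \<in> {0<..<1} - {0..1}. x powr (a - 1) * (1 - x) powr (b - 1) \<noteq> (0::real)}"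
    by (rule negligible_subset[of "{}"]) auto
  have h2: "((\<lambda>t. t powr (a - 1) * (1 - t) powr (b - 1)) has_integral Beta a b) {0<..<1}"
    using has_integral_spike_set_eq[OF n1 n2] h by simp
  hence "(\<lambda>t. t powr (a - 1) * (1 - t) powr (b - 1)) absolutely_integrable_on {0<..<1}"
    by (intro nonnegative_absolutely_integrable_1) auto
  with h2 show ?thesis by (auto dest: integral_unique)
qed

lemma beta_J:
  fixes \<beta> :: real assumes b: "\<beta> > 0"
  shows "(\<lambda>x. (1 - x) powr (\<beta> - 1) * ln x) absolutely_integrable_on {0<..<1} \<and>
         integral {0<..<1} (\<lambda>x. (1 - x) powr (\<beta> - 1) * ln x) = Gamma \<beta> / Gamma (1 + \<beta>) * (Digamma 1 - Digamma (1 + \<beta>))"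
proof (rule deriv_under[where \<delta> = "1/2" and F = "\<lambda>h. Gamma (h + 1) * Gamma \<beta> / Gamma (h + 1 + \<beta>)"])
  show "continuous_on {0<..<1} (\<lambda>x. (1 - x) powr (\<beta> - 1))"
    by (intro continuous_intros) auto
  fix h :: real assume h: "\<bar>h\<bar> \<le> 1 / 2"
  have h1: "h + 1 > 0" using h by simp
  show "(\<lambda>x. (1 - x) powr (\<beta> - 1) * x powr h) absolutely_integrable_on {0<..<1} \<and>
        integral {0<..<1} (\<lambda>x. (1 - x) powr (\<beta> - 1) * x powr h) = Gamma (h + 1) * Gamma \<beta> / Gamma (h + 1 + \<beta>)"
    by (rule ai_eq[OF beta_int[OF h1 b, unfolded Beta_def]]) auto
next
  have nz1: "(0::real) + 1 \<notin> \<int>\<^sub>\<le>\<^sub>0" by (auto dest: nonpos_Ints_nonpos)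
  have nz2: "(0::real) + 1 + \<beta> \<notin> \<int>\<^sub>\<le>\<^sub>0" using b by (auto dest!: nonpos_Ints_nonpos)
  have G1: "Gamma (1 + \<beta>) \<noteq> 0" using b by (intro Gamma_ne0) simp
  show "((\<lambda>h. Gamma (h + 1) * Gamma \<beta> / Gamma (h + 1 + \<beta>)) has_real_derivative
          Gamma \<beta> / Gamma (1 + \<beta>) * (Digamma 1 - Digamma (1 + \<beta>))) (at 0)"
    using nz1 nz2 G1
    by (auto intro!: derivative_eq_intros DERIV_chain2[OF has_field_derivative_Gamma]
             simp: field_simps power2_eq_square add.commute)
qed (use b in auto)

lemma beta_logloss:
  fixes \<beta> \<theta> :: real assumes b: "\<beta> > 0" and t: "\<theta> > 0"
  shows "logloss {0<..<1} (beta_shape_dens \<beta> \<theta>) (beta_shape_dens \<beta> 1) =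
    (ln (Gamma \<theta>) + ln (Gamma \<beta>) - ln (Gamma (\<theta> + \<beta>))) * 1 + (- (\<theta> - 1)) * (Digamma 1 - Digamma (1 + \<beta>))
    + (- (\<beta> - 1)) * integral {0<..<1} (\<lambda>x. beta_shape_dens \<beta> 1 x * ln (1 - x))"
proof -
  define cb where "cb = Gamma (1 + \<beta>) / Gamma \<beta>"
  have Gb: "Gamma \<beta> > 0" "Gamma (1 + \<beta>) > 0" using b by (simp_all add: Gamma_pos_real)
  have cbp: "cb > 0" using Gb by (simp add: cb_def)
  have Gb0: "Gamma \<beta> \<noteq> 0" using Gb by simp
  let ?g = "beta_shape_dens \<beta> 1"
  have gx: "?g x = cb * ((1 - x) powr (\<beta> - 1))" if "x \<in> {0<..<1}" for x
    using that by (simp add: beta_shape_dens_def cb_def)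
  have i1: "?g absolutely_integrable_on {0<..<1} \<and> integral {0<..<1} ?g = cb * Beta 1 \<beta>"
  proof (rule ai_eq[OF _ gx])
    show "(\<lambda>x. cb * ((1 - x) powr (\<beta> - 1))) absolutely_integrable_on {0<..<1} \<and>
          integral {0<..<1} (\<lambda>x. cb * ((1 - x) powr (\<beta> - 1))) = cb * Beta 1 \<beta>"
    proof -
      have w: "(\<lambda>x. (1 - x) powr (\<beta> - 1)) absolutely_integrable_on {0<..<1} \<and>
               integral {0<..<1} (\<lambda>x. (1 - x) powr (\<beta> - 1)) = Beta 1 \<beta>"
        by (rule ai_eq[OF beta_int[OF zero_less_one b]]) auto
      then show ?thesis by auto
    qed
  qed
  have e1: "cb * Beta 1 \<beta> = 1" using Gb by (simp add: cb_def Beta_def add.commute)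
  have i2: "(\<lambda>x. ?g x * ln x) absolutely_integrable_on {0<..<1} \<and>
            integral {0<..<1} (\<lambda>x. ?g x * ln x) = cb * (Gamma \<beta> / Gamma (1 + \<beta>) * (Digamma 1 - Digamma (1 + \<beta>)))"
  proof (rule ai_eq)
    have "integral {0<..<1} (\<lambda>x. cb * ((1 - x) powr (\<beta> - 1) * ln x)) =
          cb * integral {0<..<1} (\<lambda>x. (1 - x) powr (\<beta> - 1) * ln x)" by (rule hk_mult)
    then show "(\<lambda>x. cb * ((1 - x) powr (\<beta> - 1) * ln x)) absolutely_integrable_on {0<..<1} \<and>
          integral {0<..<1} (\<lambda>x. cb * ((1 - x) powr (\<beta> - 1) * ln x)) =
          cb * (Gamma \<beta> / Gamma (1 + \<beta>) * (Digamma 1 - Digamma (1 + \<beta>)))"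
      using beta_J[OF b] by auto
  qed (simp add: gx)
  have e2: "cb * (Gamma \<beta> / Gamma (1 + \<beta>) * (Digamma 1 - Digamma (1 + \<beta>))) = Digamma 1 - Digamma (1 + \<beta>)"
    using Gb by (simp add: cb_def)
  define \<eta> where "\<eta> = \<beta> / 2"
  have eta: "\<eta> > 0" "\<beta> - \<eta> > 0" "\<beta> + \<eta> > 0" using b by (auto simp: \<eta>_def)
  have i3: "(\<lambda>x. ?g x * ln (1 - x)) absolutely_integrable_on {0<..<1}"
  proof (rule measurable_bounded_by_integrable_imp_absolutely_integrable)
    show "(\<lambda>x. ?g x * ln (1 - x)) \<in> borel_measurable (lebesgue_on {0<..<1})"
      unfolding beta_shape_dens_def
      by (intro continuous_imp_measurable_on_sets_lebesgue continuous_intros) (use Gb0 in auto)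
    show "{0::real<..<1} \<in> sets lebesgue" by simp
    define B where "B = (\<lambda>x::real. cb / \<eta> * (x powr (1 - 1) * (1 - x) powr ((\<beta> + \<eta>) - 1)) +
                              cb / \<eta> * (x powr (1 - 1) * (1 - x) powr ((\<beta> - \<eta>) - 1)))"
    have "B absolutely_integrable_on {0<..<1}"
      unfolding B_def using beta_int[OF zero_less_one eta(3)] beta_int[OF zero_less_one eta(2)]
      by (intro set_integral_add set_integrable_mult_right) auto
    then show "B integrable_on {0<..<1}" by (rule ai_int)
    fix x :: real assume x: "x \<in> {0<..<1}"
    have x1: "1 - x > 0" using x by simp
    have "norm (?g x * ln (1 - x)) = cb * (1 - x) powr (\<beta> - 1) * \<bar>ln (1 - x)\<bar>"
      using gx[OF x] cbp by (simp add: abs_mult)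
    also have "\<dots> \<le> cb * (1 - x) powr (\<beta> - 1) * (((1 - x) powr \<eta> + (1 - x) powr (- \<eta>)) / \<eta>)"
      using cbp by (intro mult_left_mono ln_abs_bound x1 eta) auto
    also have "\<dots> = B x"
      using x x1 eta by (simp add: B_def powr_add[symmetric] field_simps)
    finally show "norm (?g x * ln (1 - x)) \<le> B x" .
  qed
  show ?thesis
  proof (rule logloss_lin3)
    show "{0::real<..<1} \<in> sets borel" by simp
    show "continuous_on {0<..<1} ?g" "continuous_on {0<..<1} (\<lambda>x. ?g x * ln x)"
         "continuous_on {0<..<1} (\<lambda>x. ?g x * ln (1 - x))"
      unfolding beta_shape_dens_def by (intro continuous_intros; use Gb0 in auto)+
    show "?g absolutely_integrable_on {0<..<1}" "integral {0<..<1} ?g = 1" using i1 e1 by auto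
    show "(\<lambda>x. ?g x * ln x) absolutely_integrable_on {0<..<1}"
         "integral {0<..<1} (\<lambda>x. ?g x * ln x) = Digamma 1 - Digamma (1 + \<beta>)" using i2 e2 by auto
    show "(\<lambda>x. ?g x * ln (1 - x)) absolutely_integrable_on {0<..<1}" by (rule i3)
    show "integral {0<..<1} (\<lambda>x. ?g x * ln (1 - x)) = integral {0<..<1} (\<lambda>x. ?g x * ln (1 - x))" ..
    fix x :: real assume x: "x \<in> {0<..<1}"
    have Gt: "Gamma \<theta> > 0" "Gamma (\<theta> + \<beta>) > 0" using t b by (simp_all add: Gamma_pos_real)
    have lnf: "ln (beta_shape_dens \<beta> \<theta> x) =
          (\<theta> - 1) * ln x + (\<beta> - 1) * ln (1 - x) + ln (Gamma (\<theta> + \<beta>)) - ln (Gamma \<theta>) - ln (Gamma \<beta>)"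
      using x Gt Gb unfolding beta_shape_dens_def
      by (simp add: ln_mult ln_div ln_powr)
    show "?g x * - ln (beta_shape_dens \<beta> \<theta> x) =
      (ln (Gamma \<theta>) + ln (Gamma \<beta>) - ln (Gamma (\<theta> + \<beta>))) * ?g x + (- (\<theta> - 1)) * (?g x * ln x) +
      (- (\<beta> - 1)) * (?g x * ln (1 - x))"
      by (simp only: lnf) (simp add: algebra_simps)
  qed
qed

lemma beta_main:
  fixes \<beta> \<theta> :: real assumes b: "\<beta> > 0" and t: "\<theta> > 1"
  shows "logloss {0<..<1} (beta_shape_dens \<beta> \<theta>) (beta_shape_dens \<beta> 1)
       > logloss {0<..<1} (beta_shape_dens \<beta> (1 / \<theta>)) (beta_shape_dens \<beta> 1)"
proof -
  have ineq: "ln_Gamma \<theta> - ln_Gamma (1 / \<theta>) - ln_Gamma (\<theta> + \<beta>) + ln_Gamma (1 / \<theta> + \<beta>)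
         + (\<theta> - 1 / \<theta>) * (Digamma (1 + \<beta>) - Digamma 1) > 0"
    by (rule beta_digamma_ineq[OF b t])
  have p: "\<theta> > 0" "1 / \<theta> > 0" "\<theta> + \<beta> > 0" "1 / \<theta> + \<beta> > 0" using t b by (auto intro: add_pos_pos)
  have e: "ln (Gamma \<theta>) = ln_Gamma \<theta>" "ln (Gamma (1 / \<theta>)) = ln_Gamma (1 / \<theta>)"
          "ln (Gamma (\<theta> + \<beta>)) = ln_Gamma (\<theta> + \<beta>)" "ln (Gamma (1 / \<theta> + \<beta>)) = ln_Gamma (1 / \<theta> + \<beta>)"
    using p by (simp_all add: ln_Gamma_real_pos)
  show ?thesis
    using beta_logloss[OF b, of \<theta>] beta_logloss[OF b, of "1 / \<theta>"] p ineq
    unfolding e by (simp add: algebra_simps)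
qed

definition igphi :: "real \<Rightarrow> real \<Rightarrow> real" where
  "igphi \<mu> x = (x - \<mu>) / (\<mu> * sqrt x)"

lemma igphi_deriv:
  assumes m: "\<mu> > 0" and x: "x > 0"
  shows "(igphi \<mu> has_field_derivative (x + \<mu>) / (2 * \<mu> * x * sqrt x)) (at x within S)"
proof -
  have s: "sqrt x > 0" using x by simp
  have ss: "sqrt x * sqrt x = x" using x by simp
  show ?thesis unfolding igphi_def using m x s
    by (auto intro!: derivative_eq_intros simp: field_simps ss)
qed

lemma igphi_sq:
  assumes m: "\<mu> > 0" and x: "x > 0"
  shows "(igphi \<mu> x)\<^sup>2 = (x - \<mu>)\<^sup>2 / (\<mu>\<^sup>2 * x)"
  using m x by (simp add: igphi_def power_divide power_mult_distrib)

lemma igphi_inj: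
  assumes m: "\<mu> > 0"
  shows "inj_on (igphi \<mu>) {0<..}"
proof -
  have mono: "igphi \<mu> x < igphi \<mu> z" if "0 < x" "x < z" for x z
  proof -
    have "sqrt x < sqrt z" using that by simp
    moreover have "igphi \<mu> x = sqrt x / \<mu> - 1 / sqrt x" "igphi \<mu> z = sqrt z / \<mu> - 1 / sqrt z"
      using that m by (auto simp: igphi_def field_simps)
    moreover have "sqrt x / \<mu> < sqrt z / \<mu>" using \<open>sqrt x < sqrt z\<close> m by (simp add: divide_strict_right_mono)
    moreover have "1 / sqrt z < 1 / sqrt x" using \<open>sqrt x < sqrt z\<close> that by (simp add: divide_strict_left_mono)
    ultimately show ?thesis by simp
  qed
  show ?thesis
  proof (rule inj_onI)
    fix x z :: real assume "x \<in> {0<..}" "z \<in> {0<..}" "igphi \<mu> x = igphi \<mu> z"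
    then show "x = z" using mono[of x z] mono[of z x] by (cases x z rule: linorder_cases) auto
  qed
qed

lemma igphi_surj:
  assumes m: "\<mu> > 0"
  shows "igphi \<mu> ` {0<..} = UNIV"
proof (intro equalityI subsetI)
  fix y :: real
  define s where "s = (\<mu> * y + sqrt ((\<mu> * y)\<^sup>2 + 4 * \<mu>)) / 2"
  have r: "sqrt ((\<mu> * y)\<^sup>2 + 4 * \<mu>) > \<bar>\<mu> * y\<bar>"
    using m by (intro real_less_rsqrt) (simp add: power2_abs)
  have s0: "s > 0" using r by (simp add: s_def abs_less_iff)
  have q: "(sqrt ((\<mu> * y)\<^sup>2 + 4 * \<mu>))\<^sup>2 = (\<mu> * y)\<^sup>2 + 4 * \<mu>"
    using m by (intro real_sqrt_pow2) (auto intro: add_nonneg_pos)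
  have eq: "s * s - \<mu> * y * s - \<mu> = 0"
    unfolding s_def using q by (simp add: algebra_simps power2_eq_square)
  have "igphi \<mu> (s\<^sup>2) = (s * s - \<mu>) / (\<mu> * s)" using s0 by (simp add: igphi_def power2_eq_square)
  also have "\<dots> = y" using eq m s0 by (simp add: field_simps)
  finally show "y \<in> igphi \<mu> ` {0<..}" using s0 by (intro image_eqI[of _ _ "s\<^sup>2"]) auto
qed auto

lemma igphi_inv:
  assumes m: "\<mu> > 0" and x: "x > 0"
  shows "igphi \<mu> (\<mu>\<^sup>2 / x) = - igphi \<mu> x"
proof -
  have sq: "sqrt (\<mu>\<^sup>2 / x) = \<mu> / sqrt x" using m x by (simp add: real_sqrt_divide)
  have sx: "sqrt x > 0" using x by simp
  show ?thesis unfolding igphi_def sq using m x sx by (simp add: field_simps power2_eq_square)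
qed

lemma ig_g:
  assumes m: "\<mu> > 0" and x: "x > 0"
  shows "invgauss_shape_dens \<mu> 1 x = normal_density 0 1 (igphi \<mu> x) / (x * sqrt x)"
proof -
  have a: "sqrt (1 / (2 * pi * x ^ 3)) = 1 / (sqrt (2 * pi) * (x * sqrt x))"
  proof -
    have "x ^ 3 = x\<^sup>2 * x" by (simp add: power2_eq_square power3_eq_cube)
    then have "sqrt (x ^ 3) = x * sqrt x" using x by (simp add: real_sqrt_mult)
    then show ?thesis by (simp add: real_sqrt_divide real_sqrt_mult)
  qed
  have b: "- 1 * (x - \<mu>)\<^sup>2 / (2 * \<mu>\<^sup>2 * x) = - (igphi \<mu> x - 0)\<^sup>2 / (2 * 1\<^sup>2)"
    using igphi_sq[OF m x] by simp
  show ?thesis unfolding invgauss_shape_dens_def normal_density_def a b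
    by simp
qed

lemma ig_transfer:
  fixes H :: "real \<Rightarrow> real" and \<mu> b :: real
  assumes m: "\<mu> > 0" and cH: "continuous_on UNIV H" and Hnn: "\<And>s. s \<ge> 0 \<Longrightarrow> H s \<ge> 0"
    and f: "(\<lambda>y. normal_density 0 1 y * H (y\<^sup>2)) absolutely_integrable_on UNIV"
           "integral UNIV (\<lambda>y. normal_density 0 1 y * H (y\<^sup>2)) = b"
  shows "(\<lambda>x. invgauss_shape_dens \<mu> 1 x * H ((x - \<mu>)\<^sup>2 / (\<mu>\<^sup>2 * x))) absolutely_integrable_on {0<..} \<and>
         integral {0<..} (\<lambda>x. invgauss_shape_dens \<mu> 1 x * H ((x - \<mu>)\<^sup>2 / (\<mu>\<^sup>2 * x))) = b"
proof -
  define N where "N = normal_density 0 1"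
  define Q where "Q = (\<lambda>x. N (igphi \<mu> x) / (x * sqrt x) * H ((igphi \<mu> x)\<^sup>2))"
  define P where "P = (\<lambda>x. \<bar>(x + \<mu>) / (2 * \<mu> * x * sqrt x)\<bar> * (N (igphi \<mu> x) * H ((igphi \<mu> x)\<^sup>2)))"
  have Nnn: "N y \<ge> 0" for y by (simp add: N_def)
  have Qnn: "Q x \<ge> 0" if "x > 0" for x using that Nnn Hnn[of "(igphi \<mu> x)\<^sup>2"] by (simp add: Q_def)
  have PQ: "P x = 1 / 2 * Q x + 1 / 2 * (x / \<mu> * Q x)" if x: "x > 0" for x
  proof -
    have "P x = (x + \<mu>) / (2 * \<mu>) * Q x" using x m by (simp add: P_def Q_def abs_mult field_simps)
    then show ?thesis using m by (simp add: field_simps)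
  qed
  have Pi: "P absolutely_integrable_on {0<..} \<and> integral {0<..} P = b"
  proof (rule cov[OF _ _ igphi_inj[OF m] igphi_surj[OF m] f[folded N_def]])
    show "{0::real<..} \<in> sets lebesgue" by simp
    show "(igphi \<mu> has_field_derivative (x + \<mu>) / (2 * \<mu> * x * sqrt x)) (at x within {0<..})"
      if "x \<in> {0<..}" for x using that m by (intro igphi_deriv) auto
  qed (simp add: P_def)
  have cQ: "continuous_on {0<..} Q"
    unfolding Q_def N_def normal_density_def igphi_def
    by (intro continuous_intros continuous_on_compose2[OF cH]) (use m in auto)
  have Qi: "Q absolutely_integrable_on {0<..}"
  proof (rule measurable_bounded_by_integrable_imp_absolutely_integrable)
    show "Q \<in> borel_measurable (lebesgue_on {0<..})"
      by (rule continuous_imp_measurable_on_sets_lebesgue[OF cQ]) simp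
    show "{0::real<..} \<in> sets lebesgue" by simp
    show "(\<lambda>x. 2 * P x) integrable_on {0<..}" using Pi by (intro ai_int) auto
    fix x :: real assume x: "x \<in> {0<..}"
    then show "norm (Q x) \<le> 2 * P x" using PQ[of x] Qnn[of x] m by (simp add: mult_nonneg_nonneg)
  qed
  define R where "R = (\<lambda>x. \<bar>- (\<mu>\<^sup>2 / x\<^sup>2)\<bar> * Q (\<mu>\<^sup>2 / x))"
  have Ri: "R absolutely_integrable_on {0<..} \<and> integral {0<..} R = integral {0<..} Q"
  proof (rule cov[OF _ _ _ _ Qi refl, where g = "\<lambda>x. \<mu>\<^sup>2 / x" and g' = "\<lambda>x. - (\<mu>\<^sup>2 / x\<^sup>2)"])
    show "{0::real<..} \<in> sets lebesgue" by simp
    show "((\<lambda>x. \<mu>\<^sup>2 / x) has_field_derivative - (\<mu>\<^sup>2 / x\<^sup>2)) (at x within {0<..})" if "x \<in> {0<..}" for x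
      using that by (auto intro!: derivative_eq_intros simp: power2_eq_square field_simps)
    show "inj_on (\<lambda>x. \<mu>\<^sup>2 / x) {0<..}" using m by (auto simp: inj_on_def)
    show "(\<lambda>x. \<mu>\<^sup>2 / x) ` {0<..} = {0<..}"
    proof (intro equalityI subsetI)
      fix y :: real assume "y \<in> {0<..}"
      then show "y \<in> (\<lambda>x. \<mu>\<^sup>2 / x) ` {0<..}" using m by (intro image_eqI[of _ _ "\<mu>\<^sup>2 / y"]) auto
    qed (use m in auto)
  qed (simp add: R_def)
  have RQ: "R x = x / \<mu> * Q x" if x: "x > 0" for x
  proof -
    have i: "igphi \<mu> (\<mu>\<^sup>2 / x) = - igphi \<mu> x" by (rule igphi_inv[OF m x])
    have Ns: "N (- y) = N y" for y by (simp add: N_def normal_density_def)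
    have sq: "sqrt (\<mu>\<^sup>2 / x) = \<mu> / sqrt x" using m x by (simp add: real_sqrt_divide)
    show ?thesis using m x unfolding R_def Q_def i Ns sq
      by (simp add: field_simps power2_eq_square)
  qed
  have Pv: "integral {0<..} P = 1 / 2 * integral {0<..} Q + 1 / 2 * integral {0<..} Q"
  proof -
    have "P absolutely_integrable_on {0<..} \<and> integral {0<..} P = 1 / 2 * integral {0<..} Q + 1 / 2 * integral {0<..} Q"
      by (rule lin2[OF Qi refl Ri[THEN conjunct1] Ri[THEN conjunct2]]) (simp add: PQ RQ)
    then show ?thesis by simp
  qed
  have Qv: "integral {0<..} Q = b" using Pv Pi by simp
  show ?thesis
  proof (rule ai_eq[where f = Q])
    show "Q absolutely_integrable_on {0<..} \<and> integral {0<..} Q = b" using Qi Qv by simp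
    fix x :: real assume x: "x \<in> {0<..}"
    then show "invgauss_shape_dens \<mu> 1 x * H ((x - \<mu>)\<^sup>2 / (\<mu>\<^sup>2 * x)) = Q x"
      using m by (simp add: Q_def N_def ig_g igphi_sq)
  qed
qed

lemma abs_ln_le: "x > 0 \<Longrightarrow> \<bar>ln x\<bar> \<le> x + 1 / (x::real)"
proof (cases "x \<ge> 1")
  case True
  assume x: "x > 0"
  have "ln x \<le> x - 1" using x by (rule ln_le_minus_one)
  moreover have "ln x \<ge> 0" using True by simp
  moreover have "1 / x > 0" using x by simp
  moreover have "\<bar>ln x\<bar> = ln x" using True by simp
  ultimately show ?thesis by linarith
next
  case False
  assume x: "x > 0"
  have "ln (1 / x) \<le> 1 / x - 1" using x by (intro ln_le_minus_one) simp
  moreover have "ln x \<le> 0" using False x by simp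
  moreover have "ln (1 / x) = - ln x" using x by (simp add: ln_div)
  ultimately show ?thesis using x by simp
qed

lemma invgauss_logloss:
  fixes \<mu> \<theta> :: real assumes m: "\<mu> > 0" and t: "\<theta> > 0"
  shows "logloss {0<..} (invgauss_shape_dens \<mu> \<theta>) (invgauss_shape_dens \<mu> 1) =
    (- ln \<theta> / 2 + ln (2 * pi) / 2) * 1 + \<theta> / 2 * 1
    + 3 / 2 * integral {0<..} (\<lambda>x. invgauss_shape_dens \<mu> 1 x * ln x)"
proof -
  let ?g = "invgauss_shape_dens \<mu> 1"
  define C where "C = max (\<mu>\<^sup>2) 1"
  have C: "C > 0" "C \<ge> \<mu>\<^sup>2" "C \<ge> 1" by (auto simp: C_def)
  have meas: "(\<lambda>s::real. c1 * (s + c2)) \<in> borel_measurable borel" for c1 c2 by measurable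
  have ni1: "integrable lborel (\<lambda>y. normal_density 0 1 y * 1)" by simp
  have ni2: "integrable lborel (\<lambda>y. normal_density 0 1 y * y\<^sup>2)"
    using integrable_std_normal_moment[of 2] by simp
  have nv2: "integral\<^sup>L lborel (\<lambda>y. normal_density 0 1 y * y\<^sup>2) = 1"
    using normal_sq_int[of 1 0] by simp
  have n1: "(\<lambda>y. normal_density 0 1 y * 1) absolutely_integrable_on UNIV \<and>
            integral UNIV (\<lambda>y. normal_density 0 1 y * 1) = 1"
    using normal_hk[of "\<lambda>_. 1" 0 1] by simp
  have n2: "(\<lambda>y. normal_density 0 1 y * y\<^sup>2) absolutely_integrable_on UNIV \<and>
            integral UNIV (\<lambda>y. normal_density 0 1 y * y\<^sup>2) = 1"
    using normal_hk[of "\<lambda>y. y\<^sup>2" 0 1] ni2 nv2 by simp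
  have n3: "(\<lambda>y. normal_density 0 1 y * (C * (y\<^sup>2 + 2 / \<mu>))) absolutely_integrable_on UNIV \<and>
            integral UNIV (\<lambda>y. normal_density 0 1 y * (C * (y\<^sup>2 + 2 / \<mu>))) = C * 1 + (C * (2 / \<mu>)) * 1"
    by (rule lin2[OF n2[THEN conjunct1] n2[THEN conjunct2] n1[THEN conjunct1] n1[THEN conjunct2]])
       (simp add: algebra_simps)
  have t1: "(\<lambda>x. ?g x * 1) absolutely_integrable_on {0<..} \<and> integral {0<..} (\<lambda>x. ?g x * 1) = 1"
    by (rule ig_transfer[where H = "\<lambda>_. 1", OF m _ _ n1[THEN conjunct1] n1[THEN conjunct2]]) auto
  have t2: "(\<lambda>x. ?g x * ((x - \<mu>)\<^sup>2 / (\<mu>\<^sup>2 * x))) absolutely_integrable_on {0<..} \<and>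
            integral {0<..} (\<lambda>x. ?g x * ((x - \<mu>)\<^sup>2 / (\<mu>\<^sup>2 * x))) = 1"
    by (rule ig_transfer[where H = "\<lambda>s. s", OF m _ _ n2[THEN conjunct1] n2[THEN conjunct2]])
       (auto intro: continuous_intros)
  have t3: "(\<lambda>x. ?g x * (C * ((x - \<mu>)\<^sup>2 / (\<mu>\<^sup>2 * x) + 2 / \<mu>))) absolutely_integrable_on {0<..}"
  proof (rule ig_transfer[where H = "\<lambda>s. C * (s + 2 / \<mu>)", OF m _ _ n3[THEN conjunct1] n3[THEN conjunct2], THEN conjunct1])
    show "continuous_on UNIV (\<lambda>s. C * (s + 2 / \<mu>))" by (intro continuous_intros)
    fix s :: real assume "s \<ge> 0" then show "C * (s + 2 / \<mu>) \<ge> 0" using C m by simp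
  qed
  have cg: "continuous_on {0<..} ?g" unfolding invgauss_shape_dens_def using m
    by (intro continuous_intros) auto
  have a3: "(\<lambda>x. ?g x * ln x) absolutely_integrable_on {0<..}"
  proof (rule measurable_bounded_by_integrable_imp_absolutely_integrable)
    show "(\<lambda>x. ?g x * ln x) \<in> borel_measurable (lebesgue_on {0<..})"
      by (intro continuous_imp_measurable_on_sets_lebesgue continuous_intros cg) auto
    show "{0::real<..} \<in> sets lebesgue" by simp
    show "(\<lambda>x. ?g x * (C * ((x - \<mu>)\<^sup>2 / (\<mu>\<^sup>2 * x) + 2 / \<mu>))) integrable_on {0<..}"
      by (rule ai_int[OF t3])
    fix x :: real assume x: "x \<in> {0<..}"
    have gnn: "?g x \<ge> 0" unfolding invgauss_shape_dens_def using x by simp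
    have T: "(x - \<mu>)\<^sup>2 / (\<mu>\<^sup>2 * x) + 2 / \<mu> = x / \<mu>\<^sup>2 + 1 / x"
      using x m by (simp add: field_simps power2_eq_square)
    have l1: "\<bar>ln x\<bar> \<le> x + 1 / x" using x by (intro abs_ln_le) simp
    have l2: "x \<le> C * (x / \<mu>\<^sup>2)" using C x m by (simp add: field_simps)
    have l3: "1 / x \<le> C * (1 / x)" using C x by (simp add: divide_right_mono)
    have l4: "C * (x / \<mu>\<^sup>2 + 1 / x) = C * (x / \<mu>\<^sup>2) + C * (1 / x)" by (simp add: algebra_simps)
    have "\<bar>ln x\<bar> \<le> C * ((x - \<mu>)\<^sup>2 / (\<mu>\<^sup>2 * x) + 2 / \<mu>)" unfolding T using l1 l2 l3 l4 by linarith
    then show "norm (?g x * ln x) \<le> ?g x * (C * ((x - \<mu>)\<^sup>2 / (\<mu>\<^sup>2 * x) + 2 / \<mu>))"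
      using gnn by (simp add: abs_mult mult_left_mono)
  qed
  show ?thesis
  proof (rule logloss_lin3)
    show "{0::real<..} \<in> sets borel" by simp
    show "continuous_on {0<..} (\<lambda>x. ?g x * 1)" "continuous_on {0<..} (\<lambda>x. ?g x * ((x - \<mu>)\<^sup>2 / (\<mu>\<^sup>2 * x)))"
         "continuous_on {0<..} (\<lambda>x. ?g x * ln x)"
      using m by (intro continuous_intros cg; auto)+
    show "(\<lambda>x. ?g x * 1) absolutely_integrable_on {0<..}" "integral {0<..} (\<lambda>x. ?g x * 1) = 1" using t1 by auto
    show "(\<lambda>x. ?g x * ((x - \<mu>)\<^sup>2 / (\<mu>\<^sup>2 * x))) absolutely_integrable_on {0<..}"
         "integral {0<..} (\<lambda>x. ?g x * ((x - \<mu>)\<^sup>2 / (\<mu>\<^sup>2 * x))) = 1" using t2 by auto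
    show "(\<lambda>x. ?g x * ln x) absolutely_integrable_on {0<..}" by (rule a3)
    show "integral {0<..} (\<lambda>x. ?g x * ln x) = integral {0<..} (\<lambda>x. ?g x * ln x)" ..
    fix x :: real assume x: "x \<in> {0<..}"
    have lnf: "ln (invgauss_shape_dens \<mu> \<theta> x) =
        (ln \<theta> - ln (2 * pi) - 3 * ln x) / 2 - \<theta> / 2 * ((x - \<mu>)\<^sup>2 / (\<mu>\<^sup>2 * x))"
      using x t m by (simp add: invgauss_shape_dens_def ln_mult ln_div ln_sqrt ln_realpow field_simps)
    show "?g x * - ln (invgauss_shape_dens \<mu> \<theta> x) =
      (- ln \<theta> / 2 + ln (2 * pi) / 2) * (?g x * 1) + \<theta> / 2 * (?g x * ((x - \<mu>)\<^sup>2 / (\<mu>\<^sup>2 * x))) +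
      3 / 2 * (?g x * ln x)"
      by (simp only: lnf) (simp add: field_simps)
  qed
qed

lemma invgauss_main:
  fixes \<mu> \<theta> :: real assumes m: "\<mu> > 0" and t: "\<theta> > 1"
  shows "logloss {0<..} (invgauss_shape_dens \<mu> \<theta>) (invgauss_shape_dens \<mu> 1)
       > logloss {0<..} (invgauss_shape_dens \<mu> (1 / \<theta>)) (invgauss_shape_dens \<mu> 1)"
proof -
  have "ln (1 / \<theta>) = - ln \<theta>" using t by (simp add: ln_div)
  then show ?thesis
    using invgauss_logloss[OF m, of \<theta>] invgauss_logloss[OF m, of "1 / \<theta>"] t key_ineq[OF t]
    by (simp add: algebra_simps)
qed

theorem theorem2:
  fixes \<theta> :: real
  assumes "\<theta> > 1"
  shows
    "logloss UNIV (normal_density 0 \<theta>) (normal_density 0 1)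
       < logloss UNIV (normal_density 0 (1 / \<theta>)) (normal_density 0 1)
   \<and> logloss {0<..} (exp_scale_dens \<theta>) (exp_scale_dens 1)
       < logloss {0<..} (exp_scale_dens (1 / \<theta>)) (exp_scale_dens 1)
   \<and> logloss UNIV (laplace_scale_dens \<theta>) (laplace_scale_dens 1)
       < logloss UNIV (laplace_scale_dens (1 / \<theta>)) (laplace_scale_dens 1)
   \<and> (\<forall>k > 0. logloss {0<..} (gengamma_scale_dens k k \<theta>) (gengamma_scale_dens k k 1)
       < logloss {0<..} (gengamma_scale_dens k k (1 / \<theta>)) (gengamma_scale_dens k k 1))
   \<and> (\<forall>k > 0. logloss {0<..} (gengamma_scale_dens k 1 \<theta>) (gengamma_scale_dens k 1 1)
       < logloss {0<..} (gengamma_scale_dens k 1 (1 / \<theta>)) (gengamma_scale_dens k 1 1))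
   \<and> (\<forall>k > 0. \<forall>\<gamma> > 0. logloss {0<..} (gengamma_scale_dens k \<gamma> \<theta>) (gengamma_scale_dens k \<gamma> 1)
       < logloss {0<..} (gengamma_scale_dens k \<gamma> (1 / \<theta>)) (gengamma_scale_dens k \<gamma> 1))
   \<and> (\<forall>\<mu>. logloss {0<..} (lognormal_logscale_dens \<mu> \<theta>) (lognormal_logscale_dens \<mu> 1)
       < logloss {0<..} (lognormal_logscale_dens \<mu> (1 / \<theta>)) (lognormal_logscale_dens \<mu> 1))
   \<and> 
     (\<forall>k > 0. logloss {0<..} (invgamma_scale_dens k \<theta>) (invgamma_scale_dens k 1)
       > logloss {0<..} (invgamma_scale_dens k (1 / \<theta>)) (invgamma_scale_dens k 1))
   \<and> 
     (\<forall>\<sigma> > 0. logloss {0<..} (gengamma_shape_dens \<sigma> 1 \<theta>) (gengamma_shape_dens \<sigma> 1 1)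
       > logloss {0<..} (gengamma_shape_dens \<sigma> 1 (1 / \<theta>)) (gengamma_shape_dens \<sigma> 1 1))
   \<and> (\<forall>\<sigma> > 0. \<forall>\<gamma> > 0. logloss {0<..} (gengamma_shape_dens \<sigma> \<gamma> \<theta>) (gengamma_shape_dens \<sigma> \<gamma> 1)
       > logloss {0<..} (gengamma_shape_dens \<sigma> \<gamma> (1 / \<theta>)) (gengamma_shape_dens \<sigma> \<gamma> 1))
   \<and> (\<forall>m > 0. logloss {m..} (pareto_shape_dens m \<theta>) (pareto_shape_dens m 1)
       > logloss {m..} (pareto_shape_dens m (1 / \<theta>)) (pareto_shape_dens m 1))
   \<and> (\<forall>\<mu> > 0. logloss {0<..} (invgauss_shape_dens \<mu> \<theta>) (invgauss_shape_dens \<mu> 1)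
       > logloss {0<..} (invgauss_shape_dens \<mu> (1 / \<theta>)) (invgauss_shape_dens \<mu> 1))
   \<and> (\<forall>\<beta> > 0. logloss {0<..<1} (beta_shape_dens \<beta> \<theta>) (beta_shape_dens \<beta> 1)
       > logloss {0<..<1} (beta_shape_dens \<beta> (1 / \<theta>)) (beta_shape_dens \<beta> 1))
   \<and> logloss_discrete (poisson_rate_pmf \<theta>) (poisson_rate_pmf 1)
       > logloss_discrete (poisson_rate_pmf (1 / \<theta>)) (poisson_rate_pmf 1)"
proof -
  have t: "\<theta> > 1" by (rule assms)
  have t0: "\<theta> > 0" "1 / \<theta> > 0" using t by auto
  have ex: "logloss {0<..} (exp_scale_dens \<theta>) (exp_scale_dens 1)
       < logloss {0<..} (exp_scale_dens (1 / \<theta>)) (exp_scale_dens 1)"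
    using ggs_main[OF zero_less_one zero_less_one t] exp_ggs[OF t0(1)] exp_ggs[OF t0(2)] by simp
  show ?thesis
    using normal_main[OF t] ex laplace_main[OF t] ggs_main[OF _ _ t] lognormal_main[OF t]
      invgamma_main[OF _ t] ggshape_main[OF _ _ t] ggshape_main[OF _ zero_less_one t]
      pareto_main[OF _ t] invgauss_main[OF _ t] beta_main[OF _ t] poisson_main[OF t]
    by auto
qed

end
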